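(* Let $P\in\mathcal{P}$, let $s$ be in the tangent set of $\mathcal{P}$ at $P$, and let $\{P_\epsilon:\epsilon\in[0,\delta)\}\in\mathscr{P}(P,\mathcal{P},s)$ satisfy $P_\epsilon\ll P$ and $\|dP_\epsilon/dP-1-\epsilon s\|_{L^2(P)}=o(\epsilon)$. If $\nu$ is pathwise differentiable at $P$, then there is a function $g:(0,\delta)\to[0,\infty)$ with $g(\epsilon)/\epsilon\to0$ as $\epsilon\to0$, not depending on $\beta$, such that for every $\beta\in\ell^2\cap[0,1]^{\mathbb{N}}$ and $\epsilon\in(0,\delta)$, $$\Big\|\nu(P)-\nu(P_\epsilon)+P_\epsilon\phi_P^\beta-\sum_{k=1}^\infty(1-\beta_k)\langle\nu(P)-\nu(P_\epsilon),h_k\rangle_{\mathcal{H}}h_k\Big\|_{\mathcal{H}}\le\big(1+\|\phi_P^\beta\|_{L^2(P;\mathcal{H})}\big)g(\epsilon).$$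
   Context: $(\mathcal{Z},\mathbf{B})$ is a Polish space, $\mathcal{P}$ a model of distributions dominated by a $\sigma$-finite measure $\lambda$, $\mathcal{H}$ a real separable Hilbert space with orthonormal basis $(h_k)_{k\ge1}$ (padded with zeros if finite-dimensional), $\nu:\mathcal{P}\to\mathcal{H}$. For $s\in L^2(P)$, $\mathscr{P}(P,\mathcal{P},s)$ is the set of submodels $\{P_\epsilon:\epsilon\in[0,\delta)\}\subset\mathcal{P}$ with $\|p_\epsilon^{1/2}-p^{1/2}-\epsilon sp^{1/2}/2\|_{L^2(\lambda)}=o(\epsilon)$; tangent set $\{s:\mathscr{P}(P,\mathcal{P},s)\ne\emptyset\}$, tangent space $\dot{\mathcal{P}}_P$ its closed linear span. $\nu$ is pathwise differentiable at $P$ if there is a continuous linear $\dot{\nu}_P:\dot{\mathcal{P}}_P\to\mathcal{H}$ with $\|\nu(P_\epsilon)-\nu(P)-\epsilon\dot{\nu}_P(s)\|_{\mathcal{H}}=o(\epsilon)$ for every tangent-set $s$ and every submodel in $\mathscr{P}(P,\mathcal{P},s)$; $\dot{\nu}_P^*$ is its adjoint. $\phi_P^\beta(z)=\sum_k\beta_k\dot{\nu}_P^*(h_k)(z)h_k$; $P_\epsilon\phi_P^\beta=\int\phi_P^\beta\,dP_\epsilon$ (Bochner integral). $L^2(P;\mathcal{H})$-norm: $\|f\|^2=\int\|f\|_{\mathcal{H}}^2dP$. *)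

theory Defs
  imports "HOL-Probability.Probability"
begin

definition dominated_model :: "'z::polish_space measure \<Rightarrow> 'z measure set \<Rightarrow> bool" where
  "dominated_model lam Ps \<longleftrightarrow> sigma_finite_measure lam \<and> sets lam = sets borel \<and>
     (\<forall>Q\<in>Ps. prob_space Q \<and> sets Q = sets borel \<and> absolutely_continuous lam Q)"

text \<open>Orthonormal basis (h k) of a separable Hilbert space, padded with zeros if finite-dimensional.\<close>
definition padded_onb :: "(nat \<Rightarrow> 'h::{real_inner,complete_space}) \<Rightarrow> bool" where
  "padded_onb h \<longleftrightarrow> (\<forall>j k. j \<noteq> k \<longrightarrow> inner (h j) (h k) = 0) \<and>
     (\<forall>k. h k = 0 \<or> norm (h k) = 1) \<and> (\<forall>k. h k = 0 \<longrightarrow> h (Suc k) = 0) \<and>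
     closure (span (range h)) = UNIV"

definition L2 :: "'z measure \<Rightarrow> ('z \<Rightarrow> real) \<Rightarrow> bool" where
  "L2 M f \<longleftrightarrow> f \<in> borel_measurable M \<and> integrable M (\<lambda>z. (f z)\<^sup>2)"

definition L2norm :: "'z measure \<Rightarrow> ('z \<Rightarrow> real) \<Rightarrow> real" where
  "L2norm M f = sqrt (\<integral>z. (f z)\<^sup>2 \<partial>M)"

definition L2normH :: "'z measure \<Rightarrow> ('z \<Rightarrow> 'h::real_normed_vector) \<Rightarrow> real" where
  "L2normH M f = sqrt (\<integral>z. (norm (f z))\<^sup>2 \<partial>M)"

definition dens :: "'z measure \<Rightarrow> 'z measure \<Rightarrow> 'z \<Rightarrow> real" where
  "dens lam Q z = enn2real (RN_deriv lam Q z)"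

definition submodel :: "'z measure \<Rightarrow> 'z measure set \<Rightarrow> 'z measure \<Rightarrow> ('z \<Rightarrow> real)
    \<Rightarrow> real \<Rightarrow> (real \<Rightarrow> 'z measure) \<Rightarrow> bool" where
  "submodel lam Ps P s \<delta> Pe \<longleftrightarrow> \<delta> > 0 \<and> (\<forall>\<epsilon>\<in>{0..<\<delta>}. Pe \<epsilon> \<in> Ps) \<and>
     ((\<lambda>\<epsilon>. L2norm lam (\<lambda>z. sqrt (dens lam (Pe \<epsilon>) z) - sqrt (dens lam P z)
                 - \<epsilon> * s z * sqrt (dens lam P z) / 2) / \<epsilon>) \<longlongrightarrow> 0) (at_right 0)"

definition tangent_set :: "'z measure \<Rightarrow> 'z measure set \<Rightarrow> 'z measure \<Rightarrow> ('z \<Rightarrow> real) set" where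
  "tangent_set lam Ps P = {s. L2 P s \<and> (\<exists>\<delta> Pe. submodel lam Ps P s \<delta> Pe)}"

definition lin_comb :: "('z \<Rightarrow> real) set \<Rightarrow> ('z \<Rightarrow> real) set" where
  "lin_comb TT = {(\<lambda>z. \<Sum>i<n. c i * t i z) | (n::nat) c t. \<forall>i<n. t i \<in> TT}"

definition tangent_space :: "'z measure \<Rightarrow> 'z measure set \<Rightarrow> 'z measure \<Rightarrow> ('z \<Rightarrow> real) set" where
  "tangent_space lam Ps P = {f. L2 P f \<and>
     (\<forall>e>0. \<exists>g\<in>lin_comb (tangent_set lam Ps P). L2norm P (\<lambda>z. f z - g z) < e)}"

definition pathwise_deriv :: "'z measure \<Rightarrow> 'z measure set \<Rightarrow> ('z measure \<Rightarrow> 'h::real_normed_vector)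
    \<Rightarrow> 'z measure \<Rightarrow> (('z \<Rightarrow> real) \<Rightarrow> 'h) \<Rightarrow> bool" where
  "pathwise_deriv lam Ps \<nu> P D \<longleftrightarrow>
     (\<forall>f\<in>tangent_space lam Ps P. \<forall>g\<in>tangent_space lam Ps P. \<forall>a b.
         D (\<lambda>z. a * f z + b * g z) = a *\<^sub>R D f + b *\<^sub>R D g) \<and>
     (\<exists>C. \<forall>f\<in>tangent_space lam Ps P. norm (D f) \<le> C * L2norm P f) \<and>
     (\<forall>s\<in>tangent_set lam Ps P. \<forall>\<delta> Pe. submodel lam Ps P s \<delta> Pe \<longrightarrow>
         ((\<lambda>\<epsilon>. norm (\<nu> (Pe \<epsilon>) - \<nu> P - \<epsilon> *\<^sub>R D s) / \<epsilon>) \<longlongrightarrow> 0) (at_right 0))"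

definition pathwise_differentiable where
  "pathwise_differentiable lam Ps \<nu> P \<longleftrightarrow> (\<exists>D. pathwise_deriv lam Ps \<nu> P D)"

definition adjoint_of :: "'z measure \<Rightarrow> 'z measure set \<Rightarrow> 'z measure \<Rightarrow> (('z \<Rightarrow> real) \<Rightarrow> 'h::real_inner)
    \<Rightarrow> ('h \<Rightarrow> 'z \<Rightarrow> real) \<Rightarrow> bool" where
  "adjoint_of lam Ps P D A \<longleftrightarrow> (\<forall>x. A x \<in> tangent_space lam Ps P \<and>
     (\<forall>f\<in>tangent_space lam Ps P. inner (D f) x = (\<integral>z. f z * A x z \<partial>P)))"

text \<open>phi_P^beta(z) = sum_k beta_k (A h_k)(z) h_k, taken as 0 where the series diverges
  (a P-null set).\<close>
definition phi :: "('h \<Rightarrow> 'z \<Rightarrow> real) \<Rightarrow> (nat \<Rightarrow> 'h::real_normed_vector) \<Rightarrow> (nat \<Rightarrow> real) \<Rightarrow> 'z \<Rightarrow> 'h" where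
  "phi A h \<beta> z = (if summable (\<lambda>k. (\<beta> k * A (h k) z) *\<^sub>R h k)
                   then (\<Sum>k. (\<beta> k * A (h k) z) *\<^sub>R h k) else 0)"

end

theory Submission
  imports Defs
begin


definition orth :: "(nat \<Rightarrow> 'h::real_inner) \<Rightarrow> bool" where
  "orth h \<longleftrightarrow> (\<forall>j k. j \<noteq> k \<longrightarrow> inner (h j) (h k) = 0)"

lemma pyth_finite:
  assumes "orth h" "finite F"
  shows "(norm (\<Sum>k\<in>F. a k *\<^sub>R h k))\<^sup>2 = (\<Sum>k\<in>F. (a k)\<^sup>2 * (norm (h k))\<^sup>2)"
  using norm_sum_Pythagorean[of F "\<lambda>k. a k *\<^sub>R h k"] assms
  by (auto simp: pairwise_def orthogonal_def orth_def power_mult_distrib)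

lemma summable_Cauchy_c:
  fixes f :: "nat \<Rightarrow> 'a::{real_normed_vector,complete_space}"
  assumes r: "\<forall>e>0. \<exists>N. \<forall>m\<ge>N. \<forall>n. norm (sum f {m..<n}) < e"
  shows "summable f"
    unfolding summable_iff_convergent Cauchy_convergent_iff [symmetric] Cauchy_iff
  proof clarify
    fix e :: real
    assume "0 < e"
    with r obtain N where N: "\<And>m n. m \<ge> N \<Longrightarrow> norm (sum f {m..<n}) < e"
      by blast
    have "norm (sum f {..<m} - sum f {..<n}) < e" if "m\<ge>N" "n\<ge>N" for m n
    proof (cases m n rule: linorder_class.le_cases)
      assume "m \<le> n"
      then show ?thesis
        by (metis N finite_lessThan lessThan_minus_lessThan lessThan_subset_iff norm_minus_commute sum_diff \<open>m\<ge>N\<close>)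
    next
      assume "n \<le> m"
      then show ?thesis
        by (metis N finite_lessThan lessThan_minus_lessThan lessThan_subset_iff sum_diff \<open>n\<ge>N\<close>)
    qed
    then show "\<exists>M. \<forall>m\<ge>M. \<forall>n\<ge>M. norm (sum f {..<m} - sum f {..<n}) < e"
      by blast
  qed

lemma orth_summable:
  fixes h :: "nat \<Rightarrow> 'h::{real_inner,complete_space}"
  assumes o: "orth h" and s: "summable (\<lambda>k. (a k)\<^sup>2 * (norm (h k))\<^sup>2)"
  shows "summable (\<lambda>k. a k *\<^sub>R h k)"
proof (rule summable_Cauchy_c, intro allI impI)
  fix e :: real assume e: "e > 0"
  then have "e\<^sup>2 > 0" by simp
  with s[unfolded summable_Cauchy] obtain N where
    N: "\<forall>m\<ge>N. \<forall>n. norm (\<Sum>k\<in>{m..<n}. (a k)\<^sup>2 * (norm (h k))\<^sup>2) < e\<^sup>2" by blast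
  show "\<exists>N. \<forall>m\<ge>N. \<forall>n. norm (\<Sum>k\<in>{m..<n}. a k *\<^sub>R h k) < e"
  proof (intro exI allI impI)
    fix m n assume "m \<ge> N"
    have "\<bar>\<Sum>k\<in>{m..<n}. (a k)\<^sup>2 * (norm (h k))\<^sup>2\<bar> < e\<^sup>2"
      using N \<open>m \<ge> N\<close> by auto
    then have "(\<Sum>k\<in>{m..<n}. (a k)\<^sup>2 * (norm (h k))\<^sup>2) < e\<^sup>2" by (simp add: abs_less_iff)
    then have "(norm (\<Sum>k\<in>{m..<n}. a k *\<^sub>R h k))\<^sup>2 < e\<^sup>2"
      using pyth_finite[OF o, of "{m..<n}" a] by simp
    then show "norm (\<Sum>k\<in>{m..<n}. a k *\<^sub>R h k) < e"
      by (rule power2_less_imp_less) (use e in auto)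
  qed
qed

lemma orth_sums_norm:
  fixes h :: "nat \<Rightarrow> 'h::{real_inner,complete_space}"
  assumes o: "orth h" and s: "summable (\<lambda>k. a k *\<^sub>R h k)"
  shows "(\<lambda>k. (a k)\<^sup>2 * (norm (h k))\<^sup>2) sums (norm (\<Sum>k. a k *\<^sub>R h k))\<^sup>2"
proof -
  have "(\<lambda>n. \<Sum>k<n. a k *\<^sub>R h k) \<longlonglongrightarrow> (\<Sum>k. a k *\<^sub>R h k)"
    using s by (rule summable_LIMSEQ)
  then have "(\<lambda>n. (norm (\<Sum>k<n. a k *\<^sub>R h k))\<^sup>2) \<longlonglongrightarrow> (norm (\<Sum>k. a k *\<^sub>R h k))\<^sup>2"
    by (intro tendsto_intros)
  then show ?thesis unfolding sums_def using pyth_finite[OF o] by simp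
qed

lemma padded_orth: "padded_onb h \<Longrightarrow> orth h"
  by (simp add: padded_onb_def orth_def)

lemma padded_norm_le: "padded_onb h \<Longrightarrow> norm (h k) \<le> 1"
  unfolding padded_onb_def by (cases "h k = 0") auto

lemma padded_inner_sq:
  assumes "padded_onb h"
  shows "(inner x (h k))\<^sup>2 * (norm (h k))\<^sup>2 = (inner x (h k))\<^sup>2"
  using assms unfolding padded_onb_def by (cases "h k = 0") auto

lemma bessel:
  assumes b: "padded_onb h"
  shows "(\<Sum>k<n. (inner x (h k))\<^sup>2) \<le> (norm x)\<^sup>2"
proof -
  define p where "p = (\<Sum>k<n. inner x (h k) *\<^sub>R h k)"
  have ip: "inner x p = (\<Sum>k<n. (inner x (h k))\<^sup>2)"
    unfolding p_def by (simp add: inner_sum_right power2_eq_square)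
  have np: "(norm p)\<^sup>2 = (\<Sum>k<n. (inner x (h k))\<^sup>2)"
    unfolding p_def using pyth_finite[OF padded_orth[OF b], of "{..<n}" "\<lambda>k. inner x (h k)"]
    padded_inner_sq[OF b] by simp
  have "0 \<le> (norm (x - p))\<^sup>2" by simp
  also have "\<dots> = (norm x)\<^sup>2 - 2 * inner x p + (norm p)\<^sup>2"
    by (simp add: power2_norm_eq_inner inner_diff inner_commute)
  finally show ?thesis using ip np by simp
qed

lemma bessel_summable:
  assumes b: "padded_onb h"
  shows "summable (\<lambda>k. (inner x (h k))\<^sup>2)"
  by (rule summableI_nonneg_bounded[where x="(norm x)\<^sup>2"]) (use bessel[OF b] in auto)

lemma onb_summable:
  fixes h :: "nat \<Rightarrow> 'h::{real_inner,complete_space}"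
  assumes b: "padded_onb h" and le: "\<And>k. \<bar>a k\<bar> \<le> \<bar>inner x (h k)\<bar>"
  shows "summable (\<lambda>k. a k *\<^sub>R h k)"
proof (rule orth_summable[OF padded_orth[OF b]])
  show "summable (\<lambda>k. (a k)\<^sup>2 * (norm (h k))\<^sup>2)"
  proof (rule summable_comparison_test[OF _ bessel_summable[OF b, of x]])
    show "\<exists>N. \<forall>n\<ge>N. norm ((a n)\<^sup>2 * (norm (h n))\<^sup>2) \<le> (inner x (h n))\<^sup>2"
    proof (intro exI allI impI)
      fix n
      have "(a n)\<^sup>2 * (norm (h n))\<^sup>2 \<le> (a n)\<^sup>2 * 1"
        using padded_norm_le[OF b, of n] by (intro mult_left_mono) (auto simp: power_le_one)
      also have "\<dots> \<le> (inner x (h n))\<^sup>2" using le[of n] by (simp add: abs_le_square_iff)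
      finally show "norm ((a n)\<^sup>2 * (norm (h n))\<^sup>2) \<le> (inner x (h n))\<^sup>2" by simp
    qed
  qed
qed

lemma onb_expansion:
  fixes h :: "nat \<Rightarrow> 'h::{real_inner,complete_space}"
  assumes b: "padded_onb h"
  shows "(\<Sum>k. inner x (h k) *\<^sub>R h k) = x"
proof -
  define S where "S = (\<Sum>k. inner x (h k) *\<^sub>R h k)"
  have sm: "summable (\<lambda>k. inner x (h k) *\<^sub>R h k)"
    by (rule onb_summable[OF b, where x=x]) simp
  have iS: "inner S (h j) = inner x (h j)" for j
  proof -
    have "inner S (h j) = (\<Sum>k. inner (inner x (h k) *\<^sub>R h k) (h j))"
      unfolding S_def by (rule bounded_linear.suminf[OF bounded_linear_inner_left sm])
    also have "(\<lambda>k. inner (inner x (h k) *\<^sub>R h k) (h j)) = (\<lambda>k. if k = j then inner x (h j) * inner (h j) (h j) else 0)"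
      using b unfolding padded_onb_def by auto
    also have "(\<Sum>k. \<dots> k) = inner x (h j) * inner (h j) (h j)"
      using sums_single[of j "\<lambda>_. inner x (h j) * inner (h j) (h j)"] by (simp add: sums_iff)
    also have "\<dots> = inner x (h j)"
      using b unfolding padded_onb_def by (cases "h j = 0") (auto simp: norm_eq_1)
    finally show ?thesis .
  qed
  define w where "w = x - S"
  have w0: "inner w (h j) = 0" for j unfolding w_def by (simp add: inner_diff_left iS)
  have "span (range h) \<subseteq> {v. inner w v = 0}"
  proof (rule span_minimal)
    show "range h \<subseteq> {v. inner w v = 0}" using w0 by auto
    show "subspace {v. inner w v = 0}"
      by (auto simp: subspace_def inner_add_right)
  qed
  moreover have "closed {v. inner w v = 0}"
    by (intro closed_Collect_eq continuous_intros)
  ultimately have "closure (span (range h)) \<subseteq> {v. inner w v = 0}"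
    by (rule closure_minimal)
  then have "inner w w = 0" using b unfolding padded_onb_def by blast
  then show ?thesis unfolding w_def S_def by simp
qed



lemma disc_real:
  fixes F G X :: real
  assumes q: "\<forall>t. 0 \<le> F + 2*t*X + t\<^sup>2*G" and G: "0 \<le> G"
  shows "X\<^sup>2 \<le> F*G"
proof (cases "G = 0")
  case True
  have "X = 0"
  proof (rule ccontr)
    assume "X \<noteq> 0"
    have "0 \<le> F + 2*(-(F+1)/(2*X))*X" using q True by (metis mult_zero_right add_0_right)
    also have "\<dots> = -1" using \<open>X \<noteq> 0\<close> by (simp add: field_simps)
    finally show False by simp
  qed
  then show ?thesis using True by simp
next
  case False
  then have Gp: "G > 0" using G by simp
  have "0 \<le> F + 2*(-X/G)*X + (-X/G)\<^sup>2*G" using q by blast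
  also have "\<dots> = F - X\<^sup>2/G" using Gp by (simp add: field_simps power2_eq_square)
  finally have "X\<^sup>2/G \<le> F" by simp
  then show ?thesis using Gp by (simp add: field_simps mult.commute)
qed

lemma abs_mult_le_sq: "\<bar>(a::real) * b\<bar> \<le> a\<^sup>2 + b\<^sup>2"
proof -
  have "0 \<le> (\<bar>a\<bar> - \<bar>b\<bar>)\<^sup>2" by simp
  then have "2 * (\<bar>a\<bar> * \<bar>b\<bar>) \<le> a\<^sup>2 + b\<^sup>2" by (simp add: power2_eq_square algebra_simps)
  moreover have "0 \<le> \<bar>a\<bar> * \<bar>b\<bar>" by simp
  ultimately show ?thesis unfolding abs_mult by linarith
qed

lemma cs_int:
  fixes f g :: "'a \<Rightarrow> real"
  assumes [measurable]: "f \<in> borel_measurable M" "g \<in> borel_measurable M"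
    and f2: "integrable M (\<lambda>x. (f x)\<^sup>2)" and g2: "integrable M (\<lambda>x. (g x)\<^sup>2)"
  shows "integrable M (\<lambda>x. f x * g x)"
proof (rule Bochner_Integration.integrable_bound[OF Bochner_Integration.integrable_add[OF f2 g2]])
  show "(\<lambda>x. f x * g x) \<in> borel_measurable M" by measurable
  show "AE x in M. norm (f x * g x) \<le> norm ((f x)\<^sup>2 + (g x)\<^sup>2)"
    using abs_mult_le_sq by (intro AE_I2) (simp add: abs_le_iff)
qed

lemma cs_ineq:
  fixes f g :: "'a \<Rightarrow> real"
  assumes [measurable]: "f \<in> borel_measurable M" "g \<in> borel_measurable M"
    and f2: "integrable M (\<lambda>x. (f x)\<^sup>2)" and g2: "integrable M (\<lambda>x. (g x)\<^sup>2)"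
  shows "\<bar>\<integral>x. f x * g x \<partial>M\<bar> \<le> sqrt (\<integral>x. (f x)\<^sup>2 \<partial>M) * sqrt (\<integral>x. (g x)\<^sup>2 \<partial>M)"
proof -
  define F where "F = (\<integral>x. (f x)\<^sup>2 \<partial>M)"
  define G where "G = (\<integral>x. (g x)\<^sup>2 \<partial>M)"
  define X where "X = (\<integral>x. f x * g x \<partial>M)"
  have fg: "integrable M (\<lambda>x. f x * g x)" by (rule cs_int) (use assms in auto)
  have F0: "0 \<le> F" unfolding F_def by simp
  have G0: "0 \<le> G" unfolding G_def by simp
  have "0 \<le> F + 2*t*X + t\<^sup>2*G" for t
  proof -
    have "0 \<le> (\<integral>x. (f x + t * g x)\<^sup>2 \<partial>M)" by simp
    also have "(\<lambda>x. (f x + t * g x)\<^sup>2) = (\<lambda>x. (f x)\<^sup>2 + ((2*t) * (f x * g x) + t\<^sup>2 * (g x)\<^sup>2))"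
      by (auto simp: power2_eq_square algebra_simps)
    also have "(\<integral>x. (f x)\<^sup>2 + ((2*t) * (f x * g x) + t\<^sup>2 * (g x)\<^sup>2) \<partial>M) = F + 2*t*X + t\<^sup>2*G"
      unfolding F_def G_def X_def using f2 g2 fg by (simp add: integral_add)
    finally show ?thesis .
  qed
  then have "X\<^sup>2 \<le> F*G" using disc_real G0 by blast
  then have "sqrt (X\<^sup>2) \<le> sqrt (F*G)" by (rule real_sqrt_le_mono)
  then show ?thesis unfolding F_def[symmetric] G_def[symmetric] X_def[symmetric]
    by (simp add: real_sqrt_mult)
qed

lemma L2_add: "L2 M f \<Longrightarrow> L2 M g \<Longrightarrow> L2 M (\<lambda>x. f x + g x)"
proof -
  assume f: "L2 M f" and g: "L2 M g"
  then have [measurable]: "f \<in> borel_measurable M" "g \<in> borel_measurable M" by (auto simp: L2_def)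
  have fg: "integrable M (\<lambda>x. f x * g x)" using f g by (intro cs_int) (auto simp: L2_def)
  have "(\<lambda>x. (f x + g x)\<^sup>2) = (\<lambda>x. (f x)\<^sup>2 + (2 * (f x * g x) + (g x)\<^sup>2))"
    by (auto simp: power2_eq_square algebra_simps)
  moreover have "integrable M (\<lambda>x. (f x)\<^sup>2 + (2 * (f x * g x) + (g x)\<^sup>2))"
    using f g fg by (auto simp: L2_def)
  ultimately show ?thesis by (auto simp: L2_def)
qed

lemma L2_cmult: "L2 M f \<Longrightarrow> L2 M (\<lambda>x. c * f x)"
  by (auto simp: L2_def power_mult_distrib)

lemma L2_minus: "L2 M f \<Longrightarrow> L2 M (\<lambda>x. - f x)"
  by (auto simp: L2_def)

lemma L2_diff: "L2 M f \<Longrightarrow> L2 M g \<Longrightarrow> L2 M (\<lambda>x. f x - g x)"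
  using L2_add[of M f "\<lambda>x. - g x"] L2_minus[of M g] by simp

lemma L2_const: "finite_measure M \<Longrightarrow> L2 M (\<lambda>x. c)"
  by (auto simp: L2_def finite_measure.integrable_const)

lemma L2_sum: "(\<And>i. i \<in> I \<Longrightarrow> L2 M (f i)) \<Longrightarrow> L2 M (\<lambda>x. \<Sum>i\<in>I. f i x)"
proof (induction I rule: infinite_finite_induct)
  case (infinite A) then show ?case by (simp add: L2_def)
next
  case empty then show ?case by (simp add: L2_def)
next
  case (insert i I)
  then show ?case using L2_add[of M "f i" "\<lambda>x. \<Sum>i\<in>I. f i x"] by simp
qed

lemma L2_integrable: "finite_measure M \<Longrightarrow> L2 M f \<Longrightarrow> integrable M f"
  unfolding L2_def by (metis finite_measure.square_integrable_imp_integrable)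

lemma L2norm_sq: "(L2norm M f)\<^sup>2 = (\<integral>x. (f x)\<^sup>2 \<partial>M)"
  unfolding L2norm_def by simp

lemma L2norm_nonneg: "0 \<le> L2norm M f"
  unfolding L2norm_def by simp

lemma cs_L2:
  "L2 M f \<Longrightarrow> L2 M g \<Longrightarrow> \<bar>\<integral>x. f x * g x \<partial>M\<bar> \<le> L2norm M f * L2norm M g"
  unfolding L2norm_def L2_def by (intro cs_ineq) auto

lemma cs_L2_int:
  "L2 M f \<Longrightarrow> L2 M g \<Longrightarrow> integrable M (\<lambda>x. f x * g x)"
  unfolding L2_def by (intro cs_int) auto

lemma dens_eq:
  assumes "sigma_finite_measure M" "finite_measure N" "absolutely_continuous M N" "sets N = sets M"
  shows "N = density M (\<lambda>x. ennreal (enn2real (RN_deriv M N x)))"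
proof -
  interpret sigma_finite_measure M by fact
  have sN: "sigma_finite_measure N" using assms(2) by (rule finite_measure.axioms(1))
  have "density M (RN_deriv M N) = N" using density_RN_deriv assms by blast
  moreover have "AE x in M. RN_deriv M N x \<noteq> \<infinity>" by (rule RN_deriv_finite) (use assms sN in auto)
  then have "AE x in M. RN_deriv M N x = ennreal (enn2real (RN_deriv M N x))"
    by eventually_elim (simp add: ennreal_enn2real less_top)
  then have "density M (RN_deriv M N) = density M (\<lambda>x. ennreal (enn2real (RN_deriv M N x)))"
    by (intro density_cong) auto
  ultimately show ?thesis by simp
qed

lemma dens_integral:
  fixes f :: "'a \<Rightarrow> 'b::{banach, second_countable_topology}"
  assumes "sigma_finite_measure M" "finite_measure N" "absolutely_continuous M N" "sets N = sets M"
    and f: "f \<in> borel_measurable M"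
  shows "integral\<^sup>L N f = (\<integral>x. enn2real (RN_deriv M N x) *\<^sub>R f x \<partial>M)"
    and "integrable N f \<longleftrightarrow> integrable M (\<lambda>x. enn2real (RN_deriv M N x) *\<^sub>R f x)"
proof -
  have e: "N = density M (\<lambda>x. ennreal (enn2real (RN_deriv M N x)))" by (rule dens_eq) fact+
  show "integral\<^sup>L N f = (\<integral>x. enn2real (RN_deriv M N x) *\<^sub>R f x \<partial>M)"
    by (subst e, rule integral_density) (use f in auto)
  show "integrable N f \<longleftrightarrow> integrable M (\<lambda>x. enn2real (RN_deriv M N x) *\<^sub>R f x)"
    by (subst e, rule integrable_density) (use f in auto)
qed



lemma model_facts:
  assumes "dominated_model lam Ps" "Q \<in> Ps"
  shows "sigma_finite_measure lam" "sets lam = sets borel" "prob_space Q" "sets Q = sets borel"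
    "absolutely_continuous lam Q" "finite_measure Q"
  using assms by (auto simp: dominated_model_def prob_space.axioms(1))

lemma model_dens_int:
  fixes f :: "'z::polish_space \<Rightarrow> real"
  assumes m: "dominated_model lam Ps" "Q \<in> Ps" and f: "f \<in> borel_measurable borel"
  shows "integral\<^sup>L Q f = (\<integral>x. dens lam Q x * f x \<partial>lam)"
    and "integrable Q f \<longleftrightarrow> integrable lam (\<lambda>x. dens lam Q x * f x)"
proof -
  note mf = model_facts[OF m]
  have fl: "f \<in> borel_measurable lam" unfolding measurable_cong_sets[OF mf(2) refl] by (rule f)
  show "integral\<^sup>L Q f = (\<integral>x. dens lam Q x * f x \<partial>lam)"
    using dens_integral(1)[OF mf(1) mf(6) mf(5) _ fl] mf by (simp add: dens_def)
  show "integrable Q f \<longleftrightarrow> integrable lam (\<lambda>x. dens lam Q x * f x)"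
    using dens_integral(2)[OF mf(1) mf(6) mf(5) _ fl] mf by (simp add: dens_def)
qed

lemma dens_meas: "dens lam Q \<in> borel_measurable lam"
  unfolding dens_def by measurable

lemma dens_nonneg: "0 \<le> dens lam Q x"
  unfolding dens_def by simp

lemma sqrt_dens_L2:
  assumes m: "dominated_model lam Ps" "Q \<in> Ps"
  shows "L2 lam (\<lambda>x. sqrt (dens lam Q x))" "(\<integral>x. (sqrt (dens lam Q x))\<^sup>2 \<partial>lam) = 1"
proof -
  note mf = model_facts[OF m]
  interpret Q: prob_space Q by fact
  have sq: "(\<lambda>x. (sqrt (dens lam Q x))\<^sup>2) = (\<lambda>x. dens lam Q x * 1)"
    by (rule ext) (simp add: dens_nonneg)
  have "integrable Q (\<lambda>x. 1::real)" by simp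
  then have i: "integrable lam (\<lambda>x. dens lam Q x * 1)"
    using model_dens_int(2)[OF m, of "\<lambda>x. 1"] by simp
  show "L2 lam (\<lambda>x. sqrt (dens lam Q x))" unfolding L2_def sq using i dens_meas by auto
  show "(\<integral>x. (sqrt (dens lam Q x))\<^sup>2 \<partial>lam) = 1"
    unfolding sq using model_dens_int(1)[OF m, of "\<lambda>x. 1"] by (simp add: Q.prob_space)
qed

lemma tangent_set_mean_zero:
  assumes model: "dominated_model lam Ps" and P: "P \<in> Ps" and s: "s \<in> tangent_set lam Ps P"
  shows "integral\<^sup>L P s = 0"
proof -
  from s obtain \<delta> Pe where L2s: "L2 P s" and sub: "submodel lam Ps P s \<delta> Pe"
    unfolding tangent_set_def by blast
  note mfP = model_facts[OF model P]
  interpret Pp: prob_space P by (fact mfP(3))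
  have sP[measurable]: "s \<in> borel_measurable P" using L2s by (simp add: L2_def)
  then have sB[measurable]: "s \<in> borel_measurable borel" unfolding measurable_cong_sets[OF mfP(4) refl, symmetric] .
  then have sL[measurable]: "s \<in> borel_measurable lam" unfolding measurable_cong_sets[OF mfP(2) refl] .
  have dP[measurable]: "dens lam P \<in> borel_measurable lam" by (rule dens_meas)
  have s2: "integrable P (\<lambda>x. (s x)\<^sup>2)" using L2s by (simp add: L2_def)
  have s1: "integrable P s" using L2_integrable[OF mfP(6) L2s] .
  define b where "b = (\<lambda>x. sqrt (dens lam P x))"
  define t where "t = (\<lambda>x. s x * b x / 2)"
  have bL2: "L2 lam b" and b1: "(\<integral>x. (b x)\<^sup>2 \<partial>lam) = 1" unfolding b_def using sqrt_dens_L2[OF model P] by auto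
  have bsq: "(b x)\<^sup>2 = dens lam P x" for x unfolding b_def using dens_nonneg by simp
  have tsq: "(t x)\<^sup>2 = dens lam P x * ((s x)\<^sup>2 / 4)" for x
    unfolding t_def using bsq[of x] by (simp add: power_mult_distrib power_divide)
  have tL2: "L2 lam t"
  proof -
    have "integrable P (\<lambda>x. (s x)\<^sup>2 / 4)" using s2 by simp
    then have "integrable lam (\<lambda>x. dens lam P x * ((s x)\<^sup>2 / 4))"
      using model_dens_int(2)[OF model P, of "\<lambda>x. (s x)\<^sup>2 / 4"] by simp
    moreover have "(\<lambda>x. (t x)\<^sup>2) = (\<lambda>x. dens lam P x * ((s x)\<^sup>2 / 4))" by (rule ext) (rule tsq)
    moreover have "t \<in> borel_measurable lam" unfolding t_def b_def by measurable
    ultimately show ?thesis unfolding L2_def by simp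
  qed
  define T where "T = (\<integral>x. (t x)\<^sup>2 \<partial>lam)"
  define X where "X = (\<integral>x. b x * t x \<partial>lam)"
  have bt: "b x * t x = dens lam P x * (s x / 2)" for x
    unfolding t_def using bsq[of x] by (simp add: power2_eq_square)
  have X: "X = integral\<^sup>L P s / 2"
    unfolding X_def bt using model_dens_int(1)[OF model P, of "\<lambda>x. s x / 2"] by simp
  define a where "a = (\<lambda>\<epsilon> x. sqrt (dens lam (Pe \<epsilon>) x))"
  define r where "r = (\<lambda>\<epsilon>. (\<lambda>z. sqrt (dens lam (Pe \<epsilon>) z) - sqrt (dens lam P z) - \<epsilon> * s z * sqrt (dens lam P z) / 2))"
  have lim: "((\<lambda>\<epsilon>. L2norm lam (r \<epsilon>) / \<epsilon>) \<longlongrightarrow> 0) (at_right 0)"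
    using sub unfolding submodel_def r_def by blast
  have dpos: "\<delta> > 0" using sub by (simp add: submodel_def)
  have key: "\<bar>X\<bar> \<le> L2norm lam (r \<epsilon>) / \<epsilon> + \<epsilon> * T + L2norm lam (r \<epsilon>) * (L2norm lam (r \<epsilon>) / \<epsilon>)"
    if e: "\<epsilon> \<in> {0<..<\<delta>}" for \<epsilon>
  proof -
    have Pe: "Pe \<epsilon> \<in> Ps" using sub e unfolding submodel_def by auto
    have aL2: "L2 lam (a \<epsilon>)" and a1: "(\<integral>x. (a \<epsilon> x)\<^sup>2 \<partial>lam) = 1"
      unfolding a_def using sqrt_dens_L2[OF model Pe] by auto
    have rdef: "r \<epsilon> x = a \<epsilon> x - b x - \<epsilon> * t x" for x
      unfolding r_def a_def b_def t_def by simp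
    have rL2: "L2 lam (r \<epsilon>)"
    proof -
      have "L2 lam (\<lambda>x. a \<epsilon> x - b x - \<epsilon> * t x)"
        using L2_diff[OF L2_diff[OF aL2 bL2] L2_cmult[OF tL2]] by simp
      moreover have "r \<epsilon> = (\<lambda>x. a \<epsilon> x - b x - \<epsilon> * t x)" by (rule ext) (rule rdef)
      ultimately show ?thesis by simp
    qed
    define n where "n = L2norm lam (r \<epsilon>)"
    have n0: "0 \<le> n" unfolding n_def by (rule L2norm_nonneg)
    have abL2: "L2 lam (\<lambda>x. a \<epsilon> x - b x)" using L2_diff[OF aL2 bL2] .
    have pw: "(a \<epsilon> x)\<^sup>2 - (b x)\<^sup>2 = 2 * \<epsilon> * (b x * t x) + 2 * (b x * r \<epsilon> x) + (a \<epsilon> x - b x)\<^sup>2" for x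
      unfolding rdef by (simp add: power2_eq_square algebra_simps)
    have ibt: "integrable lam (\<lambda>x. b x * t x)" by (rule cs_L2_int[OF bL2 tL2])
    have ibr: "integrable lam (\<lambda>x. b x * r \<epsilon> x)" by (rule cs_L2_int[OF bL2 rL2])
    have iab: "integrable lam (\<lambda>x. (a \<epsilon> x - b x)\<^sup>2)" using abL2 by (simp add: L2_def)
    have ia: "integrable lam (\<lambda>x. (a \<epsilon> x)\<^sup>2)" using aL2 by (simp add: L2_def)
    have ib: "integrable lam (\<lambda>x. (b x)\<^sup>2)" using bL2 by (simp add: L2_def)
    have "0 = (\<integral>x. (a \<epsilon> x)\<^sup>2 \<partial>lam) - (\<integral>x. (b x)\<^sup>2 \<partial>lam)" using a1 b1 by simp
    also have "\<dots> = (\<integral>x. (a \<epsilon> x)\<^sup>2 - (b x)\<^sup>2 \<partial>lam)" using ia ib by simp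
    also have "\<dots> = (\<integral>x. 2 * \<epsilon> * (b x * t x) + 2 * (b x * r \<epsilon> x) + (a \<epsilon> x - b x)\<^sup>2 \<partial>lam)"
      using pw by simp
    also have "\<dots> = 2 * \<epsilon> * X + 2 * (\<integral>x. b x * r \<epsilon> x \<partial>lam) + (\<integral>x. (a \<epsilon> x - b x)\<^sup>2 \<partial>lam)"
      unfolding X_def using ibt ibr iab by simp
    finally have eq: "0 = 2 * \<epsilon> * X + 2 * (\<integral>x. b x * r \<epsilon> x \<partial>lam) + (\<integral>x. (a \<epsilon> x - b x)\<^sup>2 \<partial>lam)" .
    have br: "\<bar>\<integral>x. b x * r \<epsilon> x \<partial>lam\<bar> \<le> n"
      using cs_L2[OF bL2 rL2] b1 unfolding n_def L2norm_def by simp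
    have "(\<integral>x. (a \<epsilon> x - b x)\<^sup>2 \<partial>lam) \<le> (\<integral>x. 2 * \<epsilon>\<^sup>2 * (t x)\<^sup>2 + 2 * (r \<epsilon> x)\<^sup>2 \<partial>lam)"
    proof (rule integral_mono[OF iab])
      show "integrable lam (\<lambda>x. 2 * \<epsilon>\<^sup>2 * (t x)\<^sup>2 + 2 * (r \<epsilon> x)\<^sup>2)"
        using tL2 rL2 by (simp add: L2_def)
      fix x
      have ab: "a \<epsilon> x - b x = \<epsilon> * t x + r \<epsilon> x" unfolding rdef by simp
      have sqb: "(u + v)\<^sup>2 \<le> 2 * u\<^sup>2 + 2 * v\<^sup>2" for u v :: real
      proof -
        have "0 \<le> (u - v)\<^sup>2" by simp
        then show ?thesis by (simp add: power2_eq_square algebra_simps)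
      qed
      have "(\<epsilon> * t x + r \<epsilon> x)\<^sup>2 \<le> 2 * (\<epsilon> * t x)\<^sup>2 + 2 * (r \<epsilon> x)\<^sup>2" by (rule sqb)
      then show "(a \<epsilon> x - b x)\<^sup>2 \<le> 2 * \<epsilon>\<^sup>2 * (t x)\<^sup>2 + 2 * (r \<epsilon> x)\<^sup>2"
        unfolding ab by (simp add: power_mult_distrib)
    qed
    also have "\<dots> = 2 * \<epsilon>\<^sup>2 * T + 2 * n\<^sup>2"
      unfolding T_def n_def L2norm_sq using tL2 rL2 by (simp add: L2_def)
    finally have ab: "(\<integral>x. (a \<epsilon> x - b x)\<^sup>2 \<partial>lam) \<le> 2 * \<epsilon>\<^sup>2 * T + 2 * n\<^sup>2" .
    have ab0: "0 \<le> (\<integral>x. (a \<epsilon> x - b x)\<^sup>2 \<partial>lam)" by simp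
    have "\<bar>2 * \<epsilon> * X\<bar> \<le> 2 * n + 2 * \<epsilon>\<^sup>2 * T + 2 * n\<^sup>2"
      using eq br ab ab0 by (simp only: abs_le_iff) linarith
    then have "\<epsilon> * \<bar>X\<bar> \<le> n + \<epsilon>\<^sup>2 * T + n\<^sup>2" using e by (simp add: abs_mult)
    then have "\<bar>X\<bar> \<le> (n + \<epsilon>\<^sup>2 * T + n\<^sup>2) / \<epsilon>" using e by (simp add: pos_le_divide_eq mult.commute)
    also have "\<dots> = n / \<epsilon> + \<epsilon> * T + n * (n / \<epsilon>)" using e by (simp add: field_simps power2_eq_square)
    finally show ?thesis unfolding n_def .
  qed
  define u where "u = (\<lambda>\<epsilon>::real. L2norm lam (r \<epsilon>) / \<epsilon>)"
  have ln: "((\<lambda>\<epsilon>. L2norm lam (r \<epsilon>)) \<longlongrightarrow> 0) (at_right 0)"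
  proof -
    have "((\<lambda>\<epsilon>. \<epsilon> * u \<epsilon>) \<longlongrightarrow> 0 * 0) (at_right 0)"
      unfolding u_def by (rule tendsto_mult[OF _ lim]) (simp add: tendsto_ident_at)
    moreover have "eventually (\<lambda>\<epsilon>. \<epsilon> * u \<epsilon> = L2norm lam (r \<epsilon>)) (at_right (0::real))"
      unfolding u_def by (rule eventually_at_rightI[of 0 1]) auto
    ultimately show ?thesis by (simp add: tendsto_cong)
  qed
  have lim2: "((\<lambda>\<epsilon>. L2norm lam (r \<epsilon>) / \<epsilon> + \<epsilon> * T + L2norm lam (r \<epsilon>) * (L2norm lam (r \<epsilon>) / \<epsilon>)) \<longlongrightarrow> 0 + 0 * T + 0 * 0) (at_right 0)"
    by (rule tendsto_add[OF tendsto_add[OF lim tendsto_mult[OF _ tendsto_const]] tendsto_mult[OF ln lim]])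
      (simp add: tendsto_ident_at)
  have "\<bar>X\<bar> \<le> 0 + 0 * T + 0 * 0"
  proof (rule tendsto_le[OF _ lim2])
    show "at_right (0::real) \<noteq> bot" by simp
    show "((\<lambda>\<epsilon>. \<bar>X\<bar>) \<longlongrightarrow> \<bar>X\<bar>) (at_right 0)" by simp
    show "eventually (\<lambda>\<epsilon>. L2norm lam (r \<epsilon>) / \<epsilon> + \<epsilon> * T + L2norm lam (r \<epsilon>) * (L2norm lam (r \<epsilon>) / \<epsilon>) \<ge> \<bar>X\<bar>) (at_right 0)"
      using eventually_at_right_real[OF dpos] by eventually_elim (use key in auto)
  qed
  then show ?thesis using X by simp
qed

lemma tangent_space_mean_zero:
  assumes model: "dominated_model lam Ps" and P: "P \<in> Ps" and f: "f \<in> tangent_space lam Ps P"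
  shows "integral\<^sup>L P f = 0"
proof -
  note mfP = model_facts[OF model P]
  interpret Pp: prob_space P by (fact mfP(3))
  have fL2: "L2 P f" using f by (simp add: tangent_space_def)
  have "\<bar>integral\<^sup>L P f\<bar> < e" if e: "e > 0" for e
  proof -
    obtain g where g: "g \<in> lin_comb (tangent_set lam Ps P)" and lt: "L2norm P (\<lambda>z. f z - g z) < e"
      using f e unfolding tangent_space_def by blast
    have "\<exists>(n::nat) (c::nat\<Rightarrow>real) t. g = (\<lambda>z. \<Sum>i<n. c i * t i z) \<and> (\<forall>i<n. t i \<in> tangent_set lam Ps P)"
      using g unfolding lin_comb_def by (simp only: mem_Collect_eq)
    then obtain n :: nat and c :: "nat \<Rightarrow> real" and t where gdef: "g = (\<lambda>z. \<Sum>i<n. c i * t i z)" and t: "\<forall>i<n. t i \<in> tangent_set lam Ps P"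
      by blast
    have tL2: "L2 P (t i)" if "i < n" for i using t that by (simp add: tangent_set_def)
    have gL2: "L2 P g" unfolding gdef by (rule L2_sum) (use tL2 L2_cmult in auto)
    have ig: "integral\<^sup>L P g = 0"
    proof -
      have "integral\<^sup>L P g = (\<Sum>i<n. c i * integral\<^sup>L P (t i))"
        unfolding gdef using L2_integrable[OF mfP(6) tL2] by (simp add: integral_sum)
      also have "\<dots> = 0" using tangent_set_mean_zero[OF model P] t by simp
      finally show ?thesis .
    qed
    have dL2: "L2 P (\<lambda>z. f z - g z)" by (rule L2_diff[OF fL2 gL2])
    have "\<bar>\<integral>z. (f z - g z) * 1 \<partial>P\<bar> \<le> L2norm P (\<lambda>z. f z - g z) * L2norm P (\<lambda>z. 1)"
      by (rule cs_L2[OF dL2 L2_const[OF mfP(6)]])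
    also have "L2norm P (\<lambda>z. 1) = 1" by (simp add: L2norm_def Pp.prob_space)
    finally have "\<bar>\<integral>z. f z - g z \<partial>P\<bar> < e" using lt by simp
    moreover have "(\<integral>z. f z - g z \<partial>P) = integral\<^sup>L P f"
      using ig L2_integrable[OF mfP(6) fL2] L2_integrable[OF mfP(6) gL2] by simp
    ultimately show ?thesis by simp
  qed
  then have "\<bar>integral\<^sup>L P f\<bar> < \<bar>integral\<^sup>L P f\<bar>" if "integral\<^sup>L P f \<noteq> 0"
    using that by (metis zero_less_abs_iff)
  then show ?thesis by auto
qed



lemma pw_summable_sq:
  fixes h :: "nat \<Rightarrow> 'h::{real_inner,complete_space}"
  assumes b: "padded_onb h" and s: "summable (\<lambda>k. (a k)\<^sup>2)"
  shows "summable (\<lambda>k. a k *\<^sub>R h k)"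
proof (rule orth_summable[OF padded_orth[OF b]])
  show "summable (\<lambda>k. (a k)\<^sup>2 * (norm (h k))\<^sup>2)"
  proof (rule summable_comparison_test[OF _ s], intro exI allI impI)
    fix n
    have "(norm (h n))\<^sup>2 \<le> 1" using padded_norm_le[OF b, of n] by (simp add: power_le_one)
    then have "(a n)\<^sup>2 * (norm (h n))\<^sup>2 \<le> (a n)\<^sup>2" by (simp add: mult_left_le)
    then show "norm ((a n)\<^sup>2 * (norm (h n))\<^sup>2) \<le> (a n)\<^sup>2" by simp
  qed
qed

lemma pw_summable_iff:
  fixes h :: "nat \<Rightarrow> 'h::{real_inner,complete_space}"
  assumes b: "padded_onb h"
  shows "summable (\<lambda>k. a k *\<^sub>R h k) \<longleftrightarrow> summable (\<lambda>k. (a k)\<^sup>2 * (norm (h k))\<^sup>2)"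
  using orth_sums_norm[OF padded_orth[OF b]] orth_summable[OF padded_orth[OF b]] sums_summable by blast

lemma pw_tail:
  fixes h :: "nat \<Rightarrow> 'h::{real_inner,complete_space}"
  assumes b: "padded_onb h" and s: "summable (\<lambda>k. (a k)\<^sup>2)"
  shows "(norm ((\<Sum>k. a k *\<^sub>R h k) - (\<Sum>k<N. a k *\<^sub>R h k)))\<^sup>2 \<le> (\<Sum>k. (a (k+N))\<^sup>2)"
proof -
  have sm: "summable (\<lambda>k. a k *\<^sub>R h k)" by (rule pw_summable_sq[OF b s])
  have eq: "(\<Sum>k. a k *\<^sub>R h k) - (\<Sum>k<N. a k *\<^sub>R h k) = (\<Sum>k. a (k+N) *\<^sub>R h (k+N))"
    using suminf_minus_initial_segment[OF sm, of N] by simp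
  have o: "orth (\<lambda>k. h (k+N))" using padded_orth[OF b] unfolding orth_def by auto
  have sm': "summable (\<lambda>k. a (k+N) *\<^sub>R h (k+N))" using sm summable_iff_shift[of "\<lambda>k. a k *\<^sub>R h k" N] by simp
  have "(\<lambda>k. (a (k+N))\<^sup>2 * (norm (h (k+N)))\<^sup>2) sums (norm (\<Sum>k. a (k+N) *\<^sub>R h (k+N)))\<^sup>2"
    using orth_sums_norm[OF o sm'] by simp
  then have "(norm (\<Sum>k. a (k+N) *\<^sub>R h (k+N)))\<^sup>2 = (\<Sum>k. (a (k+N))\<^sup>2 * (norm (h (k+N)))\<^sup>2)"
    by (simp add: sums_iff)
  also have "\<dots> \<le> (\<Sum>k. (a (k+N))\<^sup>2)"
  proof (rule suminf_le)
    fix k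
    have "(norm (h (k+N)))\<^sup>2 \<le> 1" using padded_norm_le[OF b, of "k+N"] by (simp add: power_le_one)
    then show "(a (k+N))\<^sup>2 * (norm (h (k+N)))\<^sup>2 \<le> (a (k+N))\<^sup>2" by (simp add: mult_left_le)
  next
    show "summable (\<lambda>k. (a (k+N))\<^sup>2 * (norm (h (k+N)))\<^sup>2)"
      using orth_sums_norm[OF o sm'] sums_summable by blast
    show "summable (\<lambda>k. (a (k+N))\<^sup>2)" using s summable_iff_shift[of "\<lambda>k. (a k)\<^sup>2" N] by simp
  qed
  finally show ?thesis unfolding eq .
qed

lemma pw_partial:
  fixes h :: "nat \<Rightarrow> 'h::{real_inner,complete_space}"
  assumes b: "padded_onb h" and sm: "summable (\<lambda>k. a k *\<^sub>R h k)"
  shows "(norm (\<Sum>k<N. a k *\<^sub>R h k))\<^sup>2 \<le> (norm (\<Sum>k. a k *\<^sub>R h k))\<^sup>2"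
proof -
  have sums: "(\<lambda>k. (a k)\<^sup>2 * (norm (h k))\<^sup>2) sums (norm (\<Sum>k. a k *\<^sub>R h k))\<^sup>2"
    by (rule orth_sums_norm[OF padded_orth[OF b] sm])
  have "(norm (\<Sum>k<N. a k *\<^sub>R h k))\<^sup>2 = (\<Sum>k<N. (a k)\<^sup>2 * (norm (h k))\<^sup>2)"
    by (rule pyth_finite[OF padded_orth[OF b]]) simp
  also have "\<dots> \<le> (\<Sum>k. (a k)\<^sup>2 * (norm (h k))\<^sup>2)"
    by (rule sum_le_suminf) (use sums sums_summable in auto)
  also have "\<dots> = (norm (\<Sum>k. a k *\<^sub>R h k))\<^sup>2" using sums by (simp add: sums_iff)
  finally show ?thesis .
qed

lemma nn_bound_integrable:
  fixes f :: "'a \<Rightarrow> real"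
  assumes [measurable]: "f \<in> borel_measurable M" and nn: "\<And>x. 0 \<le> f x"
    and B: "(\<integral>\<^sup>+x. ennreal (f x) \<partial>M) \<le> ennreal B" and B0: "0 \<le> B"
  shows "integrable M f \<and> integral\<^sup>L M f \<le> B"
proof -
  have "(\<integral>\<^sup>+x. ennreal (norm (f x)) \<partial>M) < \<infinity>"
    using B nn by (simp add: order_le_less_trans[OF _ ennreal_less_top])
  then have i: "integrable M f" by (intro integrableI_bounded) auto
  have "(\<integral>\<^sup>+x. ennreal (f x) \<partial>M) = ennreal (integral\<^sup>L M f)"
    by (rule nn_integral_eq_integral[OF i]) (simp add: nn)
  then have "ennreal (integral\<^sup>L M f) \<le> ennreal B" using B by simp
  then show ?thesis using i B0 by simp
qed

lemma summable_iff_ennreal_fin: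
  assumes "\<And>k. 0 \<le> f k"
  shows "summable f \<longleftrightarrow> (\<Sum>k. ennreal (f k)) < top"
  using assms summable_suminf_not_top suminf_ennreal2 by (metis ennreal_less_top less_top)

lemma phi_props:
  fixes h :: "nat \<Rightarrow> 'h::{real_inner,complete_space,second_countable_topology}" and A :: "'h \<Rightarrow> 'z \<Rightarrow> real"
  assumes b: "padded_onb h"
    and cm[measurable]: "\<And>k. A (h k) \<in> borel_measurable M"
    and ci: "\<And>k. integrable M (\<lambda>z. (A (h k) z)\<^sup>2)"
    and cb: "\<And>k. (\<integral>z. (A (h k) z)\<^sup>2 \<partial>M) \<le> K"
    and \<beta>: "summable (\<lambda>k. (\<beta> k)\<^sup>2)"
  shows "phi A h \<beta> \<in> borel_measurable M"
    and "\<And>N. integrable M (\<lambda>z. (norm (phi A h \<beta> z - (\<Sum>k<N. (\<beta> k * A (h k) z) *\<^sub>R h k)))\<^sup>2) \<and>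
         (\<integral>z. (norm (phi A h \<beta> z - (\<Sum>k<N. (\<beta> k * A (h k) z) *\<^sub>R h k)))\<^sup>2 \<partial>M) \<le> K * (\<Sum>k. (\<beta> (k+N))\<^sup>2)"
    and "\<And>N. AE z in M. (norm (\<Sum>k<N. (\<beta> k * A (h k) z) *\<^sub>R h k))\<^sup>2 \<le> (norm (phi A h \<beta> z))\<^sup>2"
proof -
  have "0 \<le> (\<integral>z. (A (h 0) z)\<^sup>2 \<partial>M)" by simp
  then have K0: "0 \<le> K" using cb[of 0] by linarith
  define S where "S z \<longleftrightarrow> (\<Sum>k. ennreal ((\<beta> k * A (h k) z)\<^sup>2 * (norm (h k))\<^sup>2)) < top" for z
  have Siff: "S z \<longleftrightarrow> summable (\<lambda>k. (\<beta> k * A (h k) z) *\<^sub>R h k)" for z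
    unfolding S_def pw_summable_iff[OF b] by (rule summable_iff_ennreal_fin[symmetric]) simp
  have Spred[measurable]: "Measurable.pred M S" unfolding S_def by measurable
  have phi_eq: "phi A h \<beta> z = (if S z then (\<Sum>k. (\<beta> k * A (h k) z) *\<^sub>R h k) else 0)" for z
    unfolding phi_def Siff by simp
  define F where "F N z = (if S z then (\<Sum>k<N. (\<beta> k * A (h k) z) *\<^sub>R h k) else 0)" for N z
  have Fm: "F N \<in> borel_measurable M" for N unfolding F_def by measurable
  have Flim: "(\<lambda>N. F N z) \<longlonglongrightarrow> phi A h \<beta> z" for z
  proof (cases "S z")
    case True
    then show ?thesis unfolding F_def phi_eq using Siff[of z] by (simp add: summable_LIMSEQ)
  next
    case False
    then show ?thesis unfolding F_def phi_eq by simp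
  qed
  show pm: "phi A h \<beta> \<in> borel_measurable M"
    by (rule borel_measurable_LIMSEQ_metric[of F, OF Fm Flim])
  define G where "G N z = (\<Sum>k. ennreal ((\<beta> (k+N))\<^sup>2 * (A (h (k+N)) z)\<^sup>2))" for N z
  have Gm[measurable]: "G N \<in> borel_measurable M" for N unfolding G_def by measurable
  have nnG: "(\<integral>\<^sup>+z. G N z \<partial>M) \<le> ennreal (K * (\<Sum>k. (\<beta> (k+N))\<^sup>2))" for N
  proof -
    have "(\<integral>\<^sup>+z. G N z \<partial>M) = (\<Sum>k. \<integral>\<^sup>+z. ennreal ((\<beta> (k+N))\<^sup>2 * (A (h (k+N)) z)\<^sup>2) \<partial>M)"
      unfolding G_def by (rule nn_integral_suminf) measurable
    also have "\<dots> \<le> (\<Sum>k. ennreal ((\<beta> (k+N))\<^sup>2 * K))"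
    proof (rule suminf_le)
      fix k
      have "(\<integral>\<^sup>+z. ennreal ((\<beta> (k+N))\<^sup>2 * (A (h (k+N)) z)\<^sup>2) \<partial>M) = ennreal (\<integral>z. (\<beta> (k+N))\<^sup>2 * (A (h (k+N)) z)\<^sup>2 \<partial>M)"
        by (rule nn_integral_eq_integral) (use ci in auto)
      also have "\<dots> = ennreal ((\<beta> (k+N))\<^sup>2 * (\<integral>z. (A (h (k+N)) z)\<^sup>2 \<partial>M))" by simp
      also have "\<dots> \<le> ennreal ((\<beta> (k+N))\<^sup>2 * K)"
        by (intro ennreal_leI mult_left_mono cb) simp
      finally show "(\<integral>\<^sup>+z. ennreal ((\<beta> (k+N))\<^sup>2 * (A (h (k+N)) z)\<^sup>2) \<partial>M) \<le> ennreal ((\<beta> (k+N))\<^sup>2 * K)" .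
    qed (rule summableI)+
    also have "\<dots> = ennreal (\<Sum>k. (\<beta> (k+N))\<^sup>2 * K)"
      by (rule suminf_ennreal2) (use K0 \<beta> summable_iff_shift[of "\<lambda>k. (\<beta> k)\<^sup>2" N] in \<open>auto intro: summable_mult2\<close>)
    also have "(\<Sum>k. (\<beta> (k+N))\<^sup>2 * K) = K * (\<Sum>k. (\<beta> (k+N))\<^sup>2)"
      using suminf_mult2[of "\<lambda>k. (\<beta> (k+N))\<^sup>2" K] \<beta> summable_iff_shift[of "\<lambda>k. (\<beta> k)\<^sup>2" N] by (simp add: mult.commute)
    finally show ?thesis .
  qed
  have "AE z in M. G 0 z \<noteq> \<infinity>"
    by (rule nn_integral_PInf_AE) (use nnG[of 0] in \<open>auto simp: top_unique\<close>)
  then have AEs: "AE z in M. summable (\<lambda>k. (\<beta> k * A (h k) z)\<^sup>2)"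
  proof (rule AE_mp, intro AE_I2 impI)
    fix z assume "G 0 z \<noteq> \<infinity>"
    then have "summable (\<lambda>k. (\<beta> k)\<^sup>2 * (A (h k) z)\<^sup>2)"
      unfolding G_def by (intro summable_suminf_not_top) auto
    then show "summable (\<lambda>k. (\<beta> k * A (h k) z)\<^sup>2)" by (simp add: power_mult_distrib)
  qed
  have phi_sum: "phi A h \<beta> z = (\<Sum>k. (\<beta> k * A (h k) z) *\<^sub>R h k)" if "summable (\<lambda>k. (\<beta> k * A (h k) z)\<^sup>2)" for z
    unfolding phi_def using pw_summable_sq[OF b that] by simp
  show "integrable M (\<lambda>z. (norm (phi A h \<beta> z - (\<Sum>k<N. (\<beta> k * A (h k) z) *\<^sub>R h k)))\<^sup>2) \<and>
         (\<integral>z. (norm (phi A h \<beta> z - (\<Sum>k<N. (\<beta> k * A (h k) z) *\<^sub>R h k)))\<^sup>2 \<partial>M) \<le> K * (\<Sum>k. (\<beta> (k+N))\<^sup>2)" for N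
  proof (rule nn_bound_integrable)
    show "(\<lambda>z. (norm (phi A h \<beta> z - (\<Sum>k<N. (\<beta> k * A (h k) z) *\<^sub>R h k)))\<^sup>2) \<in> borel_measurable M"
      using pm by measurable
    show "0 \<le> K * (\<Sum>k. (\<beta> (k+N))\<^sup>2)"
      using K0 \<beta> summable_iff_shift[of "\<lambda>k. (\<beta> k)\<^sup>2" N] by (intro mult_nonneg_nonneg suminf_nonneg) auto
    have "(\<integral>\<^sup>+z. ennreal ((norm (phi A h \<beta> z - (\<Sum>k<N. (\<beta> k * A (h k) z) *\<^sub>R h k)))\<^sup>2) \<partial>M) \<le> (\<integral>\<^sup>+z. G N z \<partial>M)"
    proof (rule nn_integral_mono_AE)
      show "AE z in M. ennreal ((norm (phi A h \<beta> z - (\<Sum>k<N. (\<beta> k * A (h k) z) *\<^sub>R h k)))\<^sup>2) \<le> G N z"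
        using AEs
      proof (rule AE_mp, intro AE_I2 impI)
        fix z assume s: "summable (\<lambda>k. (\<beta> k * A (h k) z)\<^sup>2)"
        have "(norm (phi A h \<beta> z - (\<Sum>k<N. (\<beta> k * A (h k) z) *\<^sub>R h k)))\<^sup>2 \<le> (\<Sum>k. (\<beta> (k+N) * A (h (k+N)) z)\<^sup>2)"
          unfolding phi_sum[OF s] by (rule pw_tail[OF b s])
        moreover have "G N z = ennreal (\<Sum>k. (\<beta> (k+N) * A (h (k+N)) z)\<^sup>2)"
          unfolding G_def power_mult_distrib[symmetric]
          by (rule suminf_ennreal2) (use s summable_iff_shift[of "\<lambda>k. (\<beta> k * A (h k) z)\<^sup>2" N] in auto)
        ultimately show "ennreal ((norm (phi A h \<beta> z - (\<Sum>k<N. (\<beta> k * A (h k) z) *\<^sub>R h k)))\<^sup>2) \<le> G N z"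
          by (simp add: ennreal_leI)
      qed
    qed
    then show "(\<integral>\<^sup>+z. ennreal ((norm (phi A h \<beta> z - (\<Sum>k<N. (\<beta> k * A (h k) z) *\<^sub>R h k)))\<^sup>2) \<partial>M) \<le> ennreal (K * (\<Sum>k. (\<beta> (k+N))\<^sup>2))"
      using nnG[of N] by (rule order_trans)
  qed simp
  show "AE z in M. (norm (\<Sum>k<N. (\<beta> k * A (h k) z) *\<^sub>R h k))\<^sup>2 \<le> (norm (phi A h \<beta> z))\<^sup>2" for N
    using AEs
  proof (rule AE_mp, intro AE_I2 impI)
    fix z assume s: "summable (\<lambda>k. (\<beta> k * A (h k) z)\<^sup>2)"
    show "(norm (\<Sum>k<N. (\<beta> k * A (h k) z) *\<^sub>R h k))\<^sup>2 \<le> (norm (phi A h \<beta> z))\<^sup>2"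
      unfolding phi_sum[OF s] by (rule pw_partial[OF b pw_summable_sq[OF b s]])
  qed
qed

lemma adj_bound:
  assumes deriv: "pathwise_deriv lam Ps \<nu> P D" and adj: "adjoint_of lam Ps P D A"
  shows "\<exists>C\<ge>0. \<forall>x. (\<integral>z. (A x z)\<^sup>2 \<partial>P) \<le> C\<^sup>2 * (norm x)\<^sup>2"
proof -
  obtain C where C: "\<forall>f\<in>tangent_space lam Ps P. norm (D f) \<le> C * L2norm P f"
    using deriv unfolding pathwise_deriv_def by blast
  define C0 where "C0 = max C 0"
  have C0: "norm (D f) \<le> C0 * L2norm P f" if "f \<in> tangent_space lam Ps P" for f
  proof -
    have "C * L2norm P f \<le> C0 * L2norm P f" unfolding C0_def
      by (intro mult_right_mono) (auto simp: L2norm_nonneg)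
    then show ?thesis using C that by force
  qed
  have "(\<integral>z. (A x z)\<^sup>2 \<partial>P) \<le> C0\<^sup>2 * (norm x)\<^sup>2" for x
  proof -
    define I where "I = (\<integral>z. (A x z)\<^sup>2 \<partial>P)"
    have I0: "0 \<le> I" unfolding I_def by simp
    have ts: "A x \<in> tangent_space lam Ps P" using adj unfolding adjoint_of_def by blast
    have "inner (D (A x)) x = (\<integral>z. A x z * A x z \<partial>P)" using adj ts unfolding adjoint_of_def by blast
    then have "I = inner (D (A x)) x" unfolding I_def by (simp add: power2_eq_square)
    also have "\<dots> \<le> norm (D (A x)) * norm x" by (rule norm_cauchy_schwarz)
    also have "\<dots> \<le> C0 * sqrt I * norm x"
      using C0[OF ts] unfolding I_def L2norm_def by (intro mult_right_mono) auto
    finally have le: "I \<le> C0 * sqrt I * norm x" .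
    show ?thesis
    proof (cases "I = 0")
      case True then show ?thesis unfolding I_def by simp
    next
      case False
      then have sp: "sqrt I > 0" using I0 by simp
      have "sqrt I * sqrt I \<le> (C0 * norm x) * sqrt I" using le I0 by (simp add: mult_ac)
      then have "sqrt I \<le> C0 * norm x" by (rule mult_right_le_imp_le[OF _ sp])
      then have "(sqrt I)\<^sup>2 \<le> (C0 * norm x)\<^sup>2" using sp by (intro power_mono) auto
      then show ?thesis unfolding I_def[symmetric] using I0 by (simp add: power_mult_distrib)
    qed
  qed
  moreover have "C0 \<ge> 0" unfolding C0_def by simp
  ultimately show ?thesis by blast
qed



lemma integrableI_sequence_c:
  fixes f :: "'a \<Rightarrow> 'b::{real_normed_vector, complete_space, second_countable_topology}"
    and s :: "nat \<Rightarrow> 'a \<Rightarrow> 'b"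
  assumes f[measurable]: "f \<in> borel_measurable M"
  assumes s: "\<And>i. Bochner_Integration.simple_bochner_integrable M (s i)"
  assumes lim: "(\<lambda>i. \<integral>\<^sup>+x. norm (f x - s i x) \<partial>M) \<longlonglongrightarrow> 0" (is "?S \<longlonglongrightarrow> 0")
  shows "integrable M f"
proof -
  let ?s = "\<lambda>n. Bochner_Integration.simple_bochner_integral M (s n)"
  have "\<exists>x. ?s \<longlonglongrightarrow> x"
    unfolding convergent_eq_Cauchy
  proof (rule metric_CauchyI)
    fix e :: real assume "0 < e"
    then have "0 < ennreal (e / 2)" by auto
    from order_tendstoD(2)[OF lim this]
    obtain M where M: "\<And>n. M \<le> n \<Longrightarrow> ?S n < e / 2"
      by (auto simp: eventually_sequentially)
    show "\<exists>M. \<forall>m\<ge>M. \<forall>n\<ge>M. dist (?s m) (?s n) < e"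
    proof (intro exI allI impI)
      fix m n assume m: "M \<le> m" and n: "M \<le> n"
      have "?S n \<noteq> \<infinity>"
        using M[OF n] by auto
      have "norm (?s n - ?s m) \<le> ?S n + ?S m"
        by (intro Bochner_Integration.simple_bochner_integral_bounded s f)
      also have "\<dots> < ennreal (e / 2) + e / 2"
        by (intro add_strict_mono M n m)
      also have "\<dots> = e" using \<open>0<e\<close> by (simp flip: ennreal_plus)
      finally show "dist (?s n) (?s m) < e"
        using \<open>0<e\<close> by (simp add: dist_norm ennreal_less_iff)
    qed
  qed
  then obtain x where "?s \<longlonglongrightarrow> x" ..
  show ?thesis
    by (rule, rule) fact+
qed

lemma integrableI_bounded_c:
  fixes f :: "'a \<Rightarrow> 'b::{real_normed_vector, complete_space, second_countable_topology}"
  assumes f[measurable]: "f \<in> borel_measurable M" and fin: "(\<integral>\<^sup>+x. norm (f x) \<partial>M) < \<infinity>"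
  shows "integrable M f"
proof -
  from borel_measurable_implies_sequence_metric[OF f, of 0] obtain s where
    s: "\<And>i. simple_function M (s i)" and
    pointwise: "\<And>x. x \<in> space M \<Longrightarrow> (\<lambda>i. s i x) \<longlonglongrightarrow> f x" and
    bound: "\<And>i x. x \<in> space M \<Longrightarrow> norm (s i x) \<le> 2 * norm (f x)"
    by simp metis
  show ?thesis
  proof (rule integrableI_sequence_c)
    { fix i
      have "(\<integral>\<^sup>+x. norm (s i x) \<partial>M) \<le> (\<integral>\<^sup>+x. ennreal (2 * norm (f x)) \<partial>M)"
        by (intro nn_integral_mono) (simp add: bound)
      also have "\<dots> = 2 * (\<integral>\<^sup>+x. ennreal (norm (f x)) \<partial>M)"
        by (simp add: ennreal_mult nn_integral_cmult)
      also have "\<dots> < top"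
        using fin by (simp add: ennreal_mult_less_top)
      finally have "(\<integral>\<^sup>+x. norm (s i x) \<partial>M) < \<infinity>"
        by simp }
    note fin_s = this
    show "\<And>i. Bochner_Integration.simple_bochner_integrable M (s i)"
      by (rule Bochner_Integration.simple_bochner_integrableI_bounded) fact+
    show "(\<lambda>i. \<integral>\<^sup>+ x. ennreal (norm (f x - s i x)) \<partial>M) \<longlonglongrightarrow> 0"
    proof (rule nn_integral_dominated_convergence_norm)
      show "\<And>j. AE x in M. norm (s j x) \<le> 2 * norm (f x)"
        using bound by auto
      show "\<And>i. s i \<in> borel_measurable M" "(\<lambda>x. 2 * norm (f x)) \<in> borel_measurable M"
        using s by (auto intro: borel_measurable_simple_function)
      show "(\<integral>\<^sup>+ x. ennreal (2 * norm (f x)) \<partial>M) < \<infinity>"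
        using fin by (simp add: nn_integral_cmult ennreal_mult ennreal_mult_less_top)
      show "AE x in M. (\<lambda>i. s i x) \<longlonglongrightarrow> f x"
        using pointwise by auto
    qed fact
  qed fact
qed

lemma integrable_c_of_norm:
  fixes f :: "'a \<Rightarrow> 'b::{real_normed_vector, complete_space, second_countable_topology}"
  assumes f[measurable]: "f \<in> borel_measurable M" and n: "integrable M (\<lambda>x. norm (f x))"
  shows "integrable M f"
proof (rule integrableI_bounded_c[OF f])
  show "(\<integral>\<^sup>+x. norm (f x) \<partial>M) < \<infinity>"
    using n unfolding integrable_iff_bounded by simp
qed

lemma integral_norm_bound_c:
  fixes f :: "'a \<Rightarrow> 'b::{real_normed_vector, second_countable_topology}"
  assumes i: "integrable M f"
  shows "norm (integral\<^sup>L M f) \<le> (\<integral>x. norm (f x) \<partial>M)"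
proof -
  have fm[measurable]: "f \<in> borel_measurable M" using i by (rule borel_measurable_integrable)
  have fin: "(\<integral>\<^sup>+x. norm (f x) \<partial>M) < \<infinity>"
    using i has_bochner_integral_implies_finite_norm has_bochner_integral_integrable
    by (metis integrable.simps)
  have ni: "integrable M (\<lambda>x. norm (f x))"
    by (rule integrableI_bounded) (use fin in auto)
  have "ennreal (norm (integral\<^sup>L M f)) \<le> (\<integral>\<^sup>+x. norm (f x) \<partial>M)"
    by (rule integral_norm_bound_ennreal[OF i])
  also have "\<dots> = ennreal (\<integral>x. norm (f x) \<partial>M)"
    by (rule nn_integral_eq_integral[OF ni]) simp
  finally show ?thesis by (simp add: ennreal_le_iff)
qed



theorem lemmaS7:
  fixes lam :: "'z::polish_space measure" and Ps :: "'z measure set"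
    and \<nu> :: "'z measure \<Rightarrow> 'h::{real_inner,complete_space,second_countable_topology}" and h :: "nat \<Rightarrow> 'h"
    and P :: "'z measure" and s :: "'z \<Rightarrow> real" and \<delta> :: real
    and Pe :: "real \<Rightarrow> 'z measure"
    and D :: "('z \<Rightarrow> real) \<Rightarrow> 'h" and A :: "'h \<Rightarrow> 'z \<Rightarrow> real"
  assumes model: "dominated_model lam Ps"
    and basis: "padded_onb h"
    and P: "P \<in> Ps"
    and s: "s \<in> tangent_set lam Ps P"
    and sub: "submodel lam Ps P s \<delta> Pe"
    and ac: "\<forall>\<epsilon>\<in>{0..<\<delta>}. absolutely_continuous P (Pe \<epsilon>)"
    and L2fin: "\<forall>\<epsilon>\<in>{0..<\<delta>}. integrable P (\<lambda>z. (enn2real (RN_deriv P (Pe \<epsilon>) z) - 1 - \<epsilon> * s z)\<^sup>2)"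
    and rate: "((\<lambda>\<epsilon>. L2norm P (\<lambda>z. enn2real (RN_deriv P (Pe \<epsilon>) z) - 1 - \<epsilon> * s z) / \<epsilon>)
                 \<longlongrightarrow> 0) (at_right 0)"
    and deriv: "pathwise_deriv lam Ps \<nu> P D"
    and adj: "adjoint_of lam Ps P D A"
  shows "\<exists>g::real \<Rightarrow> real. (\<forall>\<epsilon>\<in>{0<..<\<delta>}. 0 \<le> g \<epsilon>) \<and>
           ((\<lambda>\<epsilon>. g \<epsilon> / \<epsilon>) \<longlongrightarrow> 0) (at_right 0) \<and>
           (\<forall>\<beta>::nat \<Rightarrow> real. (\<forall>k. 0 \<le> \<beta> k \<and> \<beta> k \<le> 1) \<and> summable (\<lambda>k. (\<beta> k)\<^sup>2) \<longrightarrow>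
              (\<forall>\<epsilon>\<in>{0<..<\<delta>}.
                 norm (\<nu> P - \<nu> (Pe \<epsilon>) + (\<integral>z. phi A h \<beta> z \<partial>(Pe \<epsilon>))
                       - (\<Sum>k. ((1 - \<beta> k) * inner (\<nu> P - \<nu> (Pe \<epsilon>)) (h k)) *\<^sub>R h k))
                 \<le> (1 + L2normH P (phi A h \<beta>)) * g \<epsilon>))"
proof -
  note mfP = model_facts[OF model P]
  interpret Pp: prob_space P by (fact mfP(3))
  have sL2: "L2 P s" using s by (simp add: tangent_set_def)
  have sm[measurable]: "s \<in> borel_measurable P" using sL2 by (simp add: L2_def)
  have s_ts: "s \<in> tangent_space lam Ps P"
  proof -
    have "s \<in> lin_comb (tangent_set lam Ps P)"
      unfolding lin_comb_def mem_Collect_eq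
      by (intro exI[of _ "1::nat"] exI[of _ "\<lambda>_. 1::real"] exI[of _ "\<lambda>_. s"]) (use s in auto)
    moreover have "L2norm P (\<lambda>z. s z - s z) = 0" by (simp add: L2norm_def)
    ultimately show ?thesis unfolding tangent_space_def using sL2 by force
  qed
  have Ats: "A x \<in> tangent_space lam Ps P" for x using adj unfolding adjoint_of_def by blast
  have AL2: "L2 P (A x)" for x using Ats[of x] by (simp add: tangent_space_def)
  have Am[measurable]: "A x \<in> borel_measurable P" for x using AL2[of x] by (simp add: L2_def)
  have Ai2: "integrable P (\<lambda>z. (A x z)\<^sup>2)" for x using AL2[of x] by (simp add: L2_def)
  have Ai: "integrable P (A x)" for x by (rule L2_integrable[OF mfP(6) AL2])
  have A0: "integral\<^sup>L P (A x) = 0" for x by (rule tangent_space_mean_zero[OF model P Ats])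
  have Ads: "(\<integral>z. s z * A x z \<partial>P) = inner (D s) x" for x
    using adj s_ts unfolding adjoint_of_def by auto
  obtain C0 where C00: "C0 \<ge> 0" and C0: "\<And>x. (\<integral>z. (A x z)\<^sup>2 \<partial>P) \<le> C0\<^sup>2 * (norm x)\<^sup>2"
    using adj_bound[OF deriv adj] by blast
  define K where "K = C0\<^sup>2"
  have cb: "(\<integral>z. (A (h k) z)\<^sup>2 \<partial>P) \<le> K" for k
  proof -
    have "C0\<^sup>2 * (norm (h k))\<^sup>2 \<le> C0\<^sup>2 * 1"
      using padded_norm_le[OF basis, of k] by (intro mult_left_mono) (auto simp: power_le_one)
    then show ?thesis using C0[of "h k"] unfolding K_def by simp
  qed
  have dpos: "\<delta> > 0" and PeP: "\<And>\<epsilon>. \<epsilon> \<in> {0..<\<delta>} \<Longrightarrow> Pe \<epsilon> \<in> Ps" using sub by (auto simp: submodel_def)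
  have s_set: "s \<in> tangent_set lam Ps P" by (fact s)
  have e1lim: "((\<lambda>\<epsilon>. norm (\<nu> (Pe \<epsilon>) - \<nu> P - \<epsilon> *\<^sub>R D s) / \<epsilon>) \<longlongrightarrow> 0) (at_right 0)"
    using deriv s sub unfolding pathwise_deriv_def by blast
  define g where "g = (\<lambda>\<epsilon>. norm (\<nu> (Pe \<epsilon>) - \<nu> P - \<epsilon> *\<^sub>R D s) + L2norm P (\<lambda>z. enn2real (RN_deriv P (Pe \<epsilon>) z) - 1 - \<epsilon> * s z))"
  show ?thesis
  proof (intro exI[of _ g] conjI allI impI ballI)
    fix \<epsilon> :: real show "0 \<le> g \<epsilon>" unfolding g_def by (simp add: L2norm_nonneg)
  next
    have "((\<lambda>\<epsilon>. norm (\<nu> (Pe \<epsilon>) - \<nu> P - \<epsilon> *\<^sub>R D s) / \<epsilon> + L2norm P (\<lambda>z. enn2real (RN_deriv P (Pe \<epsilon>) z) - 1 - \<epsilon> * s z) / \<epsilon>) \<longlongrightarrow> 0 + 0) (at_right 0)"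
      by (rule tendsto_add[OF e1lim rate])
    then show "((\<lambda>\<epsilon>. g \<epsilon> / \<epsilon>) \<longlongrightarrow> 0) (at_right 0)" unfolding g_def by (simp add: add_divide_distrib)
  next
    fix \<beta> :: "nat \<Rightarrow> real" and \<epsilon> :: real
    assume \<beta>: "(\<forall>k. 0 \<le> \<beta> k \<and> \<beta> k \<le> 1) \<and> summable (\<lambda>k. (\<beta> k)\<^sup>2)"
      and e: "\<epsilon> \<in> {0<..<\<delta>}"
    have \<beta>01: "0 \<le> \<beta> k" "\<beta> k \<le> 1" for k using \<beta> by auto
    have \<beta>s: "summable (\<lambda>k. (\<beta> k)\<^sup>2)" using \<beta> by auto
    define Q where "Q = Pe \<epsilon>"
    have Q: "Q \<in> Ps" unfolding Q_def using PeP e by auto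
    note mfQ = model_facts[OF model Q]
    have acQ: "absolutely_continuous P Q" unfolding Q_def using ac e by auto
    have sQP: "sets Q = sets P" using mfQ mfP by simp
    define \<rho> where "\<rho> = (\<lambda>z. enn2real (RN_deriv P Q z))"
    have \<rho>m[measurable]: "\<rho> \<in> borel_measurable P" unfolding \<rho>_def by measurable
    have \<rho>0: "0 \<le> \<rho> z" for z unfolding \<rho>_def by simp
    define rem where "rem = (\<lambda>z. \<rho> z - 1 - \<epsilon> * s z)"
    have remL2: "L2 P rem" unfolding L2_def rem_def \<rho>_def Q_def using L2fin e by auto
    have remm[measurable]: "rem \<in> borel_measurable P" using remL2 by (simp add: L2_def)
    have \<rho>L2: "L2 P \<rho>"
    proof -
      have "L2 P (\<lambda>z. rem z + (1 + \<epsilon> * s z))"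
        by (intro L2_add remL2 L2_const[OF mfP(6)] L2_cmult sL2)
      moreover have "(\<lambda>z. rem z + (1 + \<epsilon> * s z)) = \<rho>" unfolding rem_def by auto
      ultimately show ?thesis by simp
    qed
    have dIr: "integral\<^sup>L Q f = (\<integral>z. \<rho> z * f z \<partial>P)" "integrable Q f \<longleftrightarrow> integrable P (\<lambda>z. \<rho> z * f z)"
      if "f \<in> borel_measurable P" for f :: "'z \<Rightarrow> real"
      unfolding \<rho>_def using dens_integral(1)[OF prob_space_imp_sigma_finite[OF mfP(3)] mfQ(6) acQ sQP that]
        dens_integral(2)[OF prob_space_imp_sigma_finite[OF mfP(3)] mfQ(6) acQ sQP that] by auto
    define \<phi> where "\<phi> = phi A h \<beta>"
    define \<phi>N where "\<phi>N = (\<lambda>N z. \<Sum>k<N. (\<beta> k * A (h k) z) *\<^sub>R h k)"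
    have \<phi>Nm[measurable]: "\<phi>N N \<in> borel_measurable P" for N unfolding \<phi>N_def by measurable
    note pp = phi_props[where A=A and h=h and M=P, OF basis Am Ai2 cb \<beta>s]
    have \<phi>m[measurable]: "\<phi> \<in> borel_measurable P" unfolding \<phi>_def by (rule pp(1))
    have tail: "integrable P (\<lambda>z. (norm (\<phi> z - \<phi>N N z))\<^sup>2)"
      "(\<integral>z. (norm (\<phi> z - \<phi>N N z))\<^sup>2 \<partial>P) \<le> K * (\<Sum>k. (\<beta> (k+N))\<^sup>2)" for N
      unfolding \<phi>_def \<phi>N_def using pp(2)[of N] by auto
    have \<phi>L2: "L2 P (\<lambda>z. norm (\<phi> z))" using tail(1)[of 0] by (simp add: L2_def \<phi>N_def)
    have partial: "AE z in P. (norm (\<phi>N N z))\<^sup>2 \<le> (norm (\<phi> z))\<^sup>2" for N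
      unfolding \<phi>_def \<phi>N_def by (rule pp(3))
    have \<phi>NL2: "L2 P (\<lambda>z. norm (\<phi>N N z))" for N
    proof -
      have "integrable P (\<lambda>z. (norm (\<phi>N N z))\<^sup>2)"
      proof (rule Bochner_Integration.integrable_bound)
        show "integrable P (\<lambda>z. (norm (\<phi> z))\<^sup>2)" using \<phi>L2 by (simp add: L2_def)
        show "(\<lambda>z. (norm (\<phi>N N z))\<^sup>2) \<in> borel_measurable P" by measurable
        show "AE z in P. norm ((norm (\<phi>N N z))\<^sup>2) \<le> norm ((norm (\<phi> z))\<^sup>2)" using partial[of N] by simp
      qed
      then show ?thesis by (simp add: L2_def)
    qed
    have \<phi>dL2: "L2 P (\<lambda>z. norm (\<phi> z - \<phi>N N z))" for N using tail(1)[of N] by (simp add: L2_def)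
    define L\<phi> where "L\<phi> = L2normH P \<phi>"
    have L\<phi>: "L\<phi> = L2norm P (\<lambda>z. norm (\<phi> z))" unfolding L\<phi>_def L2normH_def L2norm_def by simp
    have L\<phi>0: "0 \<le> L\<phi>" unfolding L\<phi> by (rule L2norm_nonneg)
    define Lr where "Lr = L2norm P rem"
    have Lr0: "0 \<le> Lr" unfolding Lr_def by (rule L2norm_nonneg)
    define \<Delta> where "\<Delta> = \<nu> P - \<nu> Q"
    define w where "w = \<Delta> + \<epsilon> *\<^sub>R D s"
    have nw: "norm w = norm (\<nu> Q - \<nu> P - \<epsilon> *\<^sub>R D s)"
    proof -
      have "w = - (\<nu> Q - \<nu> P - \<epsilon> *\<^sub>R D s)" unfolding w_def \<Delta>_def by (simp add: algebra_simps)
      then show ?thesis by (simp only: norm_minus_cancel)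
    qed
    define V where "V = \<Delta> + (\<integral>z. \<phi> z \<partial>Q) - (\<Sum>k. ((1 - \<beta> k) * inner \<Delta> (h k)) *\<^sub>R h k)"
    define VN where "VN = (\<lambda>N. (\<Sum>k<N. (\<beta> k * inner \<Delta> (h k)) *\<^sub>R h k) + (\<integral>z. \<phi>N N z \<partial>Q))"
    have cQ: "integrable Q (A x)" for x
      using dIr(2)[of "A x"] cs_L2_int[OF \<rho>L2 AL2[of x]] by simp
    have \<phi>Q: "integrable Q \<phi>"
    proof (rule integrable_c_of_norm)
      show "\<phi> \<in> borel_measurable Q" unfolding measurable_cong_sets[OF sQP refl] by (rule \<phi>m)
      have "integrable P (\<lambda>z. \<rho> z * norm (\<phi> z))" by (rule cs_L2_int[OF \<rho>L2 \<phi>L2])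
      then show "integrable Q (\<lambda>z. norm (\<phi> z))" using dIr(2)[of "\<lambda>z. norm (\<phi> z)"] by simp
    qed
    have \<phi>NQ: "integrable Q (\<phi>N N)" for N
      unfolding \<phi>N_def using cQ by (intro Bochner_Integration.integrable_sum integrable_scaleR_left integrable_mult_right) auto
    have lim1: "(\<lambda>N. \<Sum>k<N. (\<beta> k * inner \<Delta> (h k)) *\<^sub>R h k) \<longlonglongrightarrow> \<Delta> - (\<Sum>k. ((1 - \<beta> k) * inner \<Delta> (h k)) *\<^sub>R h k)"
    proof -
      have s1: "summable (\<lambda>k. (\<beta> k * inner \<Delta> (h k)) *\<^sub>R h k)"
      proof (rule onb_summable[OF basis, where x=\<Delta>])
        fix k
        have "\<bar>\<beta> k\<bar> * \<bar>inner \<Delta> (h k)\<bar> \<le> \<bar>inner \<Delta> (h k)\<bar>"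
          using \<beta>01[of k] by (intro mult_left_le_one_le) auto
        then show "\<bar>\<beta> k * inner \<Delta> (h k)\<bar> \<le> \<bar>inner \<Delta> (h k)\<bar>" by (simp only: abs_mult)
      qed
      have s2: "summable (\<lambda>k. ((1 - \<beta> k) * inner \<Delta> (h k)) *\<^sub>R h k)"
      proof (rule onb_summable[OF basis, where x=\<Delta>])
        fix k
        have "\<bar>1 - \<beta> k\<bar> * \<bar>inner \<Delta> (h k)\<bar> \<le> \<bar>inner \<Delta> (h k)\<bar>"
          using \<beta>01[of k] by (intro mult_left_le_one_le) auto
        then show "\<bar>(1 - \<beta> k) * inner \<Delta> (h k)\<bar> \<le> \<bar>inner \<Delta> (h k)\<bar>" by (simp only: abs_mult)
      qed
      have s3: "summable (\<lambda>k. inner \<Delta> (h k) *\<^sub>R h k)"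
        by (rule onb_summable[OF basis, where x=\<Delta>]) simp
      have "\<Delta> - (\<Sum>k. ((1 - \<beta> k) * inner \<Delta> (h k)) *\<^sub>R h k)
          = (\<Sum>k. inner \<Delta> (h k) *\<^sub>R h k) - (\<Sum>k. ((1 - \<beta> k) * inner \<Delta> (h k)) *\<^sub>R h k)"
        using onb_expansion[OF basis, of \<Delta>] by simp
      also have "\<dots> = (\<Sum>k. inner \<Delta> (h k) *\<^sub>R h k - ((1 - \<beta> k) * inner \<Delta> (h k)) *\<^sub>R h k)"
        by (rule suminf_diff[OF s3 s2])
      also have "\<dots> = (\<Sum>k. (\<beta> k * inner \<Delta> (h k)) *\<^sub>R h k)"
      proof (rule arg_cong[where f=suminf], rule ext)
        fix k
        have coef: "inner \<Delta> (h k) - (1 - \<beta> k) * inner \<Delta> (h k) = \<beta> k * inner \<Delta> (h k)"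
          by (simp add: algebra_simps)
        show "inner \<Delta> (h k) *\<^sub>R h k - ((1 - \<beta> k) * inner \<Delta> (h k)) *\<^sub>R h k = (\<beta> k * inner \<Delta> (h k)) *\<^sub>R h k"
          by (simp only: scaleR_left_diff_distrib[symmetric] coef)
      qed
      finally have eq: "\<Delta> - (\<Sum>k. ((1 - \<beta> k) * inner \<Delta> (h k)) *\<^sub>R h k) = (\<Sum>k. (\<beta> k * inner \<Delta> (h k)) *\<^sub>R h k)" .
      show ?thesis unfolding eq by (rule summable_LIMSEQ[OF s1])
    qed
    have tail0: "(\<lambda>N. \<Sum>k. (\<beta> (k+N))\<^sup>2) \<longlonglongrightarrow> 0"
    proof -
      have "(\<lambda>N. (\<Sum>k. (\<beta> k)\<^sup>2) - (\<Sum>k<N. (\<beta> k)\<^sup>2)) \<longlonglongrightarrow> (\<Sum>k. (\<beta> k)\<^sup>2) - (\<Sum>k. (\<beta> k)\<^sup>2)"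
        by (intro tendsto_diff tendsto_const summable_LIMSEQ[OF \<beta>s])
      then show ?thesis using suminf_minus_initial_segment[OF \<beta>s] by simp
    qed
    have lim2: "(\<lambda>N. \<integral>z. \<phi>N N z \<partial>Q) \<longlonglongrightarrow> (\<integral>z. \<phi> z \<partial>Q)"
    proof -
      have bnd: "norm ((\<integral>z. \<phi>N N z \<partial>Q) - (\<integral>z. \<phi> z \<partial>Q)) \<le> L2norm P \<rho> * sqrt (K * (\<Sum>k. (\<beta> (k+N))\<^sup>2))" for N
      proof -
        have "norm ((\<integral>z. \<phi>N N z \<partial>Q) - (\<integral>z. \<phi> z \<partial>Q)) = norm (\<integral>z. \<phi> z - \<phi>N N z \<partial>Q)"
        proof -
          have "(\<integral>z. \<phi> z - \<phi>N N z \<partial>Q) = (\<integral>z. \<phi> z \<partial>Q) - (\<integral>z. \<phi>N N z \<partial>Q)"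
            by (rule Bochner_Integration.integral_diff[OF \<phi>Q \<phi>NQ[of N]])
          then show ?thesis by (simp only: norm_minus_commute)
        qed
        also have "\<dots> \<le> (\<integral>z. norm (\<phi> z - \<phi>N N z) \<partial>Q)"
          by (rule integral_norm_bound_c) (use \<phi>Q \<phi>NQ[of N] in auto)
        also have "\<dots> = (\<integral>z. \<rho> z * norm (\<phi> z - \<phi>N N z) \<partial>P)" by (rule dIr(1)) measurable
        also have "\<dots> \<le> L2norm P \<rho> * L2norm P (\<lambda>z. norm (\<phi> z - \<phi>N N z))"
          using cs_L2[OF \<rho>L2 \<phi>dL2[of N]] by simp
        also have "\<dots> \<le> L2norm P \<rho> * sqrt (K * (\<Sum>k. (\<beta> (k+N))\<^sup>2))"
          unfolding L2norm_def[of P "\<lambda>z. norm (\<phi> z - \<phi>N N z)"]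
          by (intro mult_left_mono real_sqrt_le_mono tail(2) L2norm_nonneg)
        finally show ?thesis .
      qed
      have "(\<lambda>N. L2norm P \<rho> * sqrt (K * (\<Sum>k. (\<beta> (k+N))\<^sup>2))) \<longlonglongrightarrow> L2norm P \<rho> * sqrt (K * 0)"
        by (intro tendsto_mult[OF tendsto_const] tendsto_real_sqrt tendsto_mult[OF tendsto_const] tail0)
      then have lim0: "(\<lambda>N. L2norm P \<rho> * sqrt (K * (\<Sum>k. (\<beta> (k+N))\<^sup>2))) \<longlonglongrightarrow> 0" by simp
      have "\<forall>N. norm ((\<integral>z. \<phi>N N z \<partial>Q) - (\<integral>z. \<phi> z \<partial>Q)) \<le> L2norm P \<rho> * sqrt (K * (\<Sum>k. (\<beta> (k+N))\<^sup>2))"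
        using bnd by blast
      then have "(\<lambda>N. (\<integral>z. \<phi>N N z \<partial>Q) - (\<integral>z. \<phi> z \<partial>Q)) \<longlonglongrightarrow> 0"
        by (rule Lim_null_comparison[OF always_eventually lim0])
      then show ?thesis by (simp add: LIM_zero_iff)
    qed
    have VNlim: "VN \<longlonglongrightarrow> V"
    proof -
      have "VN \<longlonglongrightarrow> (\<Delta> - (\<Sum>k. ((1 - \<beta> k) * inner \<Delta> (h k)) *\<^sub>R h k)) + (\<integral>z. \<phi> z \<partial>Q)"
        unfolding VN_def by (rule tendsto_add[OF lim1 lim2])
      moreover have "(\<Delta> - (\<Sum>k. ((1 - \<beta> k) * inner \<Delta> (h k)) *\<^sub>R h k)) + (\<integral>z. \<phi> z \<partial>Q) = V"
        unfolding V_def by (simp only: diff_add_eq)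
      ultimately show ?thesis by simp
    qed
    have VNb: "norm (VN N) \<le> norm w + Lr * L\<phi>" for N
    proof -
      have intk: "(\<integral>z. A (h k) z \<partial>Q) = (\<integral>z. rem z * A (h k) z \<partial>P) + \<epsilon> * inner (D s) (h k)" for k
      proof -
        have "(\<integral>z. A (h k) z \<partial>Q) = (\<integral>z. \<rho> z * A (h k) z \<partial>P)" by (rule dIr(1)) simp
        also have "(\<lambda>z. \<rho> z * A (h k) z) = (\<lambda>z. rem z * A (h k) z + (A (h k) z + \<epsilon> * (s z * A (h k) z)))"
          unfolding rem_def by (auto simp: algebra_simps)
        also have "(\<integral>z. rem z * A (h k) z + (A (h k) z + \<epsilon> * (s z * A (h k) z)) \<partial>P)
            = (\<integral>z. rem z * A (h k) z \<partial>P) + (integral\<^sup>L P (A (h k)) + \<epsilon> * (\<integral>z. s z * A (h k) z \<partial>P))"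
          using cs_L2_int[OF remL2 AL2[of "h k"]] cs_L2_int[OF sL2 AL2[of "h k"]] Ai[of "h k"] by simp
        finally show ?thesis using A0 Ads by simp
      qed
      have IQ: "(\<integral>z. \<phi>N N z \<partial>Q) = (\<Sum>k<N. (\<beta> k * ((\<integral>z. rem z * A (h k) z \<partial>P) + \<epsilon> * inner (D s) (h k))) *\<^sub>R h k)"
      proof -
        have "(\<integral>z. \<phi>N N z \<partial>Q) = (\<Sum>k<N. (\<integral>z. (\<beta> k * A (h k) z) *\<^sub>R h k \<partial>Q))"
          unfolding \<phi>N_def using cQ by (intro Bochner_Integration.integral_sum integrable_scaleR_left integrable_mult_right) auto
        also have "\<dots> = (\<Sum>k<N. (\<beta> k * (\<integral>z. A (h k) z \<partial>Q)) *\<^sub>R h k)"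
          using cQ by simp
        finally show ?thesis using intk by simp
      qed
      define RN where "RN = (\<integral>z. rem z *\<^sub>R \<phi>N N z \<partial>P)"
      have RNeq: "RN = (\<Sum>k<N. (\<beta> k * (\<integral>z. rem z * A (h k) z \<partial>P)) *\<^sub>R h k)"
      proof -
        have fe: "(\<lambda>z. rem z *\<^sub>R \<phi>N N z) = (\<lambda>z. \<Sum>k<N. (\<beta> k * (rem z * A (h k) z)) *\<^sub>R h k)"
          unfolding \<phi>N_def by (simp add: scaleR_sum_right mult.left_commute)
        have "RN = (\<Sum>k<N. (\<integral>z. (\<beta> k * (rem z * A (h k) z)) *\<^sub>R h k \<partial>P))"
          unfolding RN_def fe using cs_L2_int[OF remL2 AL2]
          by (intro Bochner_Integration.integral_sum integrable_scaleR_left integrable_mult_right) auto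
        also have "\<dots> = (\<Sum>k<N. (\<beta> k * (\<integral>z. rem z * A (h k) z \<partial>P)) *\<^sub>R h k)"
          using cs_L2_int[OF remL2 AL2] by simp
        finally show ?thesis .
      qed
      define WN where "WN = (\<Sum>k<N. (\<beta> k * inner w (h k)) *\<^sub>R h k)"
      define rk where "rk = (\<lambda>k. \<integral>z. rem z * A (h k) z \<partial>P)"
      have v1: "VN N = (\<Sum>k<N. (\<beta> k * inner \<Delta> (h k) + \<beta> k * (rk k + \<epsilon> * inner (D s) (h k))) *\<^sub>R h k)"
        unfolding VN_def IQ rk_def by (simp add: scaleR_add_left sum.distrib)
      have v2: "WN + RN = (\<Sum>k<N. (\<beta> k * inner w (h k) + \<beta> k * rk k) *\<^sub>R h k)"
        unfolding WN_def RNeq rk_def by (simp add: scaleR_add_left sum.distrib)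
      have cf: "\<beta> k * inner \<Delta> (h k) + \<beta> k * (rk k + \<epsilon> * inner (D s) (h k)) = \<beta> k * inner w (h k) + \<beta> k * rk k" for k
      proof -
        have "inner w (h k) = inner \<Delta> (h k) + \<epsilon> * inner (D s) (h k)" unfolding w_def by (simp add: inner_add_left)
        then show ?thesis by (simp add: algebra_simps)
      qed
      have split: "VN N = WN + RN" unfolding v1 v2 cf ..
      have WNb: "norm WN \<le> norm w"
      proof -
        have "(norm WN)\<^sup>2 = (\<Sum>k<N. (\<beta> k * inner w (h k))\<^sup>2 * (norm (h k))\<^sup>2)"
          unfolding WN_def by (rule pyth_finite[OF padded_orth[OF basis]]) simp
        also have "\<dots> \<le> (\<Sum>k<N. (inner w (h k))\<^sup>2)"
        proof (rule sum_mono)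
          fix k
          have a: "(norm (h k))\<^sup>2 \<le> 1" using padded_norm_le[OF basis, of k] by (simp add: power_le_one)
          have b: "(\<beta> k)\<^sup>2 \<le> 1" using \<beta>01[of k] by (simp add: power_le_one)
          have "(\<beta> k * inner w (h k))\<^sup>2 * (norm (h k))\<^sup>2 \<le> (\<beta> k * inner w (h k))\<^sup>2"
            using a by (simp add: mult_left_le)
          also have "\<dots> = (\<beta> k)\<^sup>2 * (inner w (h k))\<^sup>2" by (simp add: power_mult_distrib)
          also have "\<dots> \<le> (inner w (h k))\<^sup>2" using b by (simp add: mult_left_le_one_le)
          finally show "(\<beta> k * inner w (h k))\<^sup>2 * (norm (h k))\<^sup>2 \<le> (inner w (h k))\<^sup>2" .
        qed
        also have "\<dots> \<le> (norm w)\<^sup>2" by (rule bessel[OF basis])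
        finally show ?thesis by (rule power2_le_imp_le) simp
      qed
      have RNb: "norm RN \<le> Lr * L\<phi>"
      proof -
        have "(\<lambda>z. rem z *\<^sub>R \<phi>N N z) = (\<lambda>z. \<Sum>k<N. (\<beta> k * (rem z * A (h k) z)) *\<^sub>R h k)"
          unfolding \<phi>N_def by (simp add: scaleR_sum_right mult.left_commute)
        moreover have "integrable P (\<lambda>z. \<Sum>k<N. (\<beta> k * (rem z * A (h k) z)) *\<^sub>R h k)"
          using cs_L2_int[OF remL2 AL2] by (intro Bochner_Integration.integrable_sum integrable_scaleR_left integrable_mult_right) auto
        ultimately have iR: "integrable P (\<lambda>z. rem z *\<^sub>R \<phi>N N z)" by simp
        have "norm RN \<le> (\<integral>z. norm (rem z *\<^sub>R \<phi>N N z) \<partial>P)" unfolding RN_def by (rule integral_norm_bound_c[OF iR])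
        also have "\<dots> = (\<integral>z. \<bar>rem z\<bar> * norm (\<phi>N N z) \<partial>P)" by simp
        also have "\<dots> \<le> L2norm P (\<lambda>z. \<bar>rem z\<bar>) * L2norm P (\<lambda>z. norm (\<phi>N N z))"
        proof -
          have "(\<lambda>z. \<bar>rem z\<bar>) \<in> borel_measurable P" by measurable
          then have "L2 P (\<lambda>z. \<bar>rem z\<bar>)" using remL2 by (simp add: L2_def)
          from cs_L2[OF this \<phi>NL2[of N]] show ?thesis by simp
        qed
        also have "L2norm P (\<lambda>z. \<bar>rem z\<bar>) = Lr" unfolding Lr_def L2norm_def by simp
        also have "L2norm P (\<lambda>z. norm (\<phi>N N z)) \<le> L\<phi>"
        proof -
          have "(\<integral>z. (norm (\<phi>N N z))\<^sup>2 \<partial>P) \<le> (\<integral>z. (norm (\<phi> z))\<^sup>2 \<partial>P)"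
            by (rule integral_mono_AE[OF _ _ partial]) (use \<phi>NL2 \<phi>L2 in \<open>auto simp: L2_def\<close>)
          then show ?thesis unfolding L\<phi> L2norm_def by (rule real_sqrt_le_mono)
        qed
        finally show ?thesis using Lr0 by (simp add: mult_left_mono)
      qed
      have "norm (VN N) \<le> norm WN + norm RN" unfolding split by (rule norm_triangle_ineq)
      then show ?thesis using WNb RNb by simp
    qed
    have "norm V \<le> norm w + Lr * L\<phi>"
      using VNb by (intro LIMSEQ_le_const2[OF tendsto_norm[OF VNlim]]) blast
    also have "\<dots> \<le> (1 + L\<phi>) * (norm w + Lr)"
    proof -
      have "0 \<le> Lr + L\<phi> * norm w" using L\<phi>0 Lr0 by simp
      moreover have "(1 + L\<phi>) * (norm w + Lr) = norm w + Lr * L\<phi> + (Lr + L\<phi> * norm w)"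
        by (simp add: algebra_simps)
      ultimately show ?thesis by linarith
    qed
    also have "norm w + Lr = g \<epsilon>" unfolding g_def nw Lr_def rem_def \<rho>_def Q_def by simp
    finally show "norm (\<nu> P - \<nu> (Pe \<epsilon>) + (\<integral>z. phi A h \<beta> z \<partial>(Pe \<epsilon>))
                       - (\<Sum>k. ((1 - \<beta> k) * inner (\<nu> P - \<nu> (Pe \<epsilon>)) (h k)) *\<^sub>R h k))
                 \<le> (1 + L2normH P (phi A h \<beta>)) * g \<epsilon>"
      unfolding V_def \<Delta>_def Q_def \<phi>_def L\<phi>_def .
  qed
qed


end
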